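(* The class $\mathcal U_{\mathrm{fin}}$ of all finite two-sorted ultrametric spaces, with dc-embeddings as morphisms, is a Fraïssé class: it is nonempty, has only countably many dc-isomorphism types, and has the joint embedding property and the amalgamation property. Its Fraïssé limit $\mathbb U$ is dc-isomorphic to $\mathbb U_{\mathbb Q}$, the countable rational Urysohn ultrametric space viewed as a two-sorted space with distance set $\mathbb Q_{\ge 0}$. In particular, $\mathbb U$ is both dc-homogeneous and iso-homogeneous.
   Context: A two-sorted ultrametric space is a triple $(X,d_X,D_X)$ where $D_X$ is a linearly ordered set with least element $0$ (the distance set), $X$ is a set of points, and $d_X\colon X\times X\to D_X$ satisfies $d_X(x,y)=d_X(y,x)$, $d_X(x,y)=0\iff x=y$, and $d_X(x,z)\le \max\{d_X(x,y),d_X(y,z)\}$. It is finite (resp. countable) if both $X$ and $D_X$ are finite (resp. countable). A dc-embedding $f\colon (X,d_X,D_X)\to (Y,d_Y,D_Y)$ is an injective map $f\colon X\to Y$ together with an order embedding $D_f\colon D_X\to D_Y$ with $D_f(0)=0$ such that $d_Y(f(x),f(x'))=D_f(d_X(x,x'))$ for all $x,x'\in X$. A dc-isomorphism is a dc-embedding that is bijective in both sorts. It is an isometric embedding if $D_X\subseteq D_Y$ and $D_f$ is the inclusion; an isometry is a dc-isomorphism with $D_X=D_Y$ and $D_f$ the identity. $A$ is a substructure of $X$ if $A\subseteq X$, $D_A\subseteq D_X$ and the inclusion is a dc-embedding. Joint embedding property: any two objects dc-embed into a common one. Amalgamation property: for all dc-embeddings $\alpha_1\colon A\to B$, $\alpha_2\colon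 A\to C$ of finite spaces there are a finite $D$ and dc-embeddings $\beta_1\colon B\to D$, $\beta_2\colon C\to D$ with $\beta_1\circ\alpha_1=\beta_2\circ\alpha_2$. The Fraïssé limit of the class is the (unique up to dc-isomorphism) countable two-sorted ultrametric space that is the union of an increasing chain of finite substructures, into which every finite space dc-embeds, and in which every dc-isomorphism between finite substructures extends to a dc-automorphism. A space $X$ is dc-homogeneous if every dc-isomorphism between finite substructures of $X$ extends to a dc-automorphism of $X$; it is iso-homogeneous if every isometry between finite substructures of $X$ extends to an isometry of $X$. $\mathbb U_{\mathbb Q}$ is the unique (up to isometry) countable ultrametric space with all distances in $\mathbb Q_{\ge0}$ into which every finite ultrametric space with rational distances embeds isometrically and in which every isometry between finite subsets extends to an isometry of the whole space. *)

theory Defs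
  imports Complex_Main "HOL-Library.Countable_Set"
begin

record ('a, 'b) tsu =
  tpts   :: "'a set"
  tdists :: "'b set"
  tle    :: "'b \<Rightarrow> 'b \<Rightarrow> bool"
  tzero  :: 'b
  tdist  :: "'a \<Rightarrow> 'a \<Rightarrow> 'b"

definition is_tsu :: "('a, 'b) tsu \<Rightarrow> bool" where
  "is_tsu X \<longleftrightarrow>
     (\<forall>s\<in>tdists X. tle X s s) \<and>
     (\<forall>s\<in>tdists X. \<forall>t\<in>tdists X. tle X s t \<and> tle X t s \<longrightarrow> s = t) \<and>
     (\<forall>s\<in>tdists X. \<forall>t\<in>tdists X. \<forall>u\<in>tdists X. tle X s t \<and> tle X t u \<longrightarrow> tle X s u) \<and>
     (\<forall>s\<in>tdists X. \<forall>t\<in>tdists X. tle X s t \<or> tle X t s) \<and>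
     tzero X \<in> tdists X \<and> (\<forall>t\<in>tdists X. tle X (tzero X) t) \<and>
     (\<forall>x\<in>tpts X. \<forall>y\<in>tpts X. tdist X x y \<in> tdists X) \<and>
     (\<forall>x\<in>tpts X. \<forall>y\<in>tpts X. tdist X x y = tdist X y x) \<and>
     (\<forall>x\<in>tpts X. \<forall>y\<in>tpts X. tdist X x y = tzero X \<longleftrightarrow> x = y) \<and>
     (\<forall>x\<in>tpts X. \<forall>y\<in>tpts X. \<forall>z\<in>tpts X.
        tle X (tdist X x z) (tdist X x y) \<or> tle X (tdist X x z) (tdist X y z))"
  \<comment> \<open>the last clause is d(x,z) <= max(d(x,y),d(y,z)) in a linear order\<close>

definition finite_tsu :: "('a, 'b) tsu \<Rightarrow> bool" where
  "finite_tsu X \<longleftrightarrow> is_tsu X \<and> finite (tpts X) \<and> finite (tdists X)"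

definition countable_tsu :: "('a, 'b) tsu \<Rightarrow> bool" where
  "countable_tsu X \<longleftrightarrow> is_tsu X \<and> countable (tpts X) \<and> countable (tdists X)"

text \<open>dc-embedding (f, g) : X \<rightarrow> Y, with g = D_f.\<close>
definition dc_emb :: "('a, 'b) tsu \<Rightarrow> ('c, 'd) tsu \<Rightarrow> ('a \<Rightarrow> 'c) \<Rightarrow> ('b \<Rightarrow> 'd) \<Rightarrow> bool" where
  "dc_emb X Y f g \<longleftrightarrow>
     inj_on f (tpts X) \<and> f ` tpts X \<subseteq> tpts Y \<and>
     g ` tdists X \<subseteq> tdists Y \<and>
     (\<forall>s\<in>tdists X. \<forall>t\<in>tdists X. tle Y (g s) (g t) \<longleftrightarrow> tle X s t) \<and>
     g (tzero X) = tzero Y \<and>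
     (\<forall>x\<in>tpts X. \<forall>x'\<in>tpts X. tdist Y (f x) (f x') = g (tdist X x x'))"

definition dc_iso :: "('a, 'b) tsu \<Rightarrow> ('c, 'd) tsu \<Rightarrow> ('a \<Rightarrow> 'c) \<Rightarrow> ('b \<Rightarrow> 'd) \<Rightarrow> bool" where
  "dc_iso X Y f g \<longleftrightarrow> dc_emb X Y f g \<and>
     bij_betw f (tpts X) (tpts Y) \<and> bij_betw g (tdists X) (tdists Y)"

definition dc_isomorphic :: "('a, 'b) tsu \<Rightarrow> ('c, 'd) tsu \<Rightarrow> bool" where
  "dc_isomorphic X Y \<longleftrightarrow> (\<exists>f g. dc_iso X Y f g)"

definition isometry :: "('a, 'b) tsu \<Rightarrow> ('c, 'b) tsu \<Rightarrow> ('a \<Rightarrow> 'c) \<Rightarrow> bool" where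
  "isometry X Y f \<longleftrightarrow> tdists X = tdists Y \<and> dc_iso X Y f id"

definition substructure :: "('a, 'b) tsu \<Rightarrow> ('a, 'b) tsu \<Rightarrow> bool" where
  "substructure A X \<longleftrightarrow> is_tsu A \<and> tpts A \<subseteq> tpts X \<and> tdists A \<subseteq> tdists X \<and>
     dc_emb A X id id"

definition dc_homogeneous :: "('a, 'b) tsu \<Rightarrow> bool" where
  "dc_homogeneous X \<longleftrightarrow>
     (\<forall>A B f g. substructure A X \<and> finite_tsu A \<and> substructure B X \<and> finite_tsu B \<and>
        dc_iso A B f g \<longrightarrow>
        (\<exists>F G. dc_iso X X F G \<and> (\<forall>x\<in>tpts A. F x = f x) \<and> (\<forall>t\<in>tdists A. G t = g t)))"

definition iso_homogeneous :: "('a, 'b) tsu \<Rightarrow> bool" where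
  "iso_homogeneous X \<longleftrightarrow>
     (\<forall>A B f. substructure A X \<and> finite_tsu A \<and> substructure B X \<and> finite_tsu B \<and>
        isometry A B f \<longrightarrow>
        (\<exists>F. isometry X X F \<and> (\<forall>x\<in>tpts A. F x = f x)))"

text \<open>Fraisse limit of the class of finite two-sorted ultrametric spaces.
  Universality is quantified over finite spaces carried by nat (every finite
  space is dc-isomorphic to one of these).\<close>
definition fraisse_limit :: "('a, 'b) tsu \<Rightarrow> bool" where
  "fraisse_limit U \<longleftrightarrow> countable_tsu U \<and>
     (\<exists>C :: nat \<Rightarrow> ('a, 'b) tsu.
        (\<forall>n. substructure (C n) U \<and> finite_tsu (C n)) \<and>
        (\<forall>n. substructure (C n) (C (Suc n))) \<and>
        tpts U = (\<Union>n. tpts (C n)) \<and> tdists U = (\<Union>n. tdists (C n))) \<and>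
     (\<forall>A :: (nat, nat) tsu. finite_tsu A \<longrightarrow> (\<exists>f g. dc_emb A U f g)) \<and>
     dc_homogeneous U"

definition rat_ultrametric :: "'a set \<Rightarrow> ('a \<Rightarrow> 'a \<Rightarrow> rat) \<Rightarrow> bool" where
  "rat_ultrametric P d \<longleftrightarrow>
     (\<forall>x\<in>P. \<forall>y\<in>P. 0 \<le> d x y \<and> d x y = d y x \<and> (d x y = 0 \<longleftrightarrow> x = y)) \<and>
     (\<forall>x\<in>P. \<forall>y\<in>P. \<forall>z\<in>P. d x z \<le> max (d x y) (d y z))"

definition rat_isometry_on :: "'a set \<Rightarrow> ('a \<Rightarrow> 'a \<Rightarrow> rat) \<Rightarrow> ('b \<Rightarrow> 'b \<Rightarrow> rat) \<Rightarrow> ('a \<Rightarrow> 'b) \<Rightarrow> bool" where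
  "rat_isometry_on S dS dT h \<longleftrightarrow> inj_on h S \<and> (\<forall>x\<in>S. \<forall>y\<in>S. dT (h x) (h y) = dS x y)"

definition is_UQ :: "'a set \<Rightarrow> ('a \<Rightarrow> 'a \<Rightarrow> rat) \<Rightarrow> bool" where
  "is_UQ P d \<longleftrightarrow> countable P \<and> rat_ultrametric P d \<and>
     (\<forall>(A :: nat set) dA. finite A \<and> rat_ultrametric A dA \<longrightarrow>
        (\<exists>h. h ` A \<subseteq> P \<and> rat_isometry_on A dA d h)) \<and>
     (\<forall>S T h. finite S \<and> finite T \<and> S \<subseteq> P \<and> T \<subseteq> P \<and> bij_betw h S T \<and>
        rat_isometry_on S d d h \<longrightarrow>
        (\<exists>H. bij_betw H P P \<and> rat_isometry_on P d d H \<and> (\<forall>x\<in>S. H x = h x)))"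

definition rat_tsu :: "'a set \<Rightarrow> ('a \<Rightarrow> 'a \<Rightarrow> rat) \<Rightarrow> ('a, rat) tsu" where
  "rat_tsu P d = \<lparr>tpts = P, tdists = {q. 0 \<le> q}, tle = (\<le>), tzero = 0, tdist = d\<rparr>"

end

theory Submission
  imports Defs "HOL-Library.Countable_Set"
begin


definition ultra :: "('a,'b) tsu \<Rightarrow> 'b \<Rightarrow> 'b \<Rightarrow> 'b \<Rightarrow> bool" where
  "ultra X a b c \<longleftrightarrow> (tle X a b \<or> tle X a c) \<and> (tle X b a \<or> tle X b c) \<and> (tle X c a \<or> tle X c b)"

definition EP :: "('a,'b) tsu \<Rightarrow> bool" where
  "EP X \<longleftrightarrow> is_tsu X \<and>
    (\<forall>t\<in>tdists X. \<exists>u\<in>tdists X. tle X t u \<and> t \<noteq> u) \<and>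
    (\<forall>s\<in>tdists X. \<forall>t\<in>tdists X. tle X s t \<and> s \<noteq> t \<longrightarrow>
        (\<exists>u\<in>tdists X. tle X s u \<and> s \<noteq> u \<and> tle X u t \<and> u \<noteq> t)) \<and>
    (\<forall>S r. finite S \<and> S \<subseteq> tpts X \<and> (\<forall>x\<in>S. r x \<in> tdists X \<and> r x \<noteq> tzero X) \<and>
        (\<forall>x\<in>S. \<forall>y\<in>S. ultra X (r x) (r y) (tdist X x y)) \<longrightarrow>
        (\<exists>p\<in>tpts X. \<forall>x\<in>S. tdist X p x = r x))"

lemma EP_tsu: "EP X \<Longrightarrow> is_tsu X" unfolding EP_def by (elim conjE)
lemma EP_nomax: "EP X \<Longrightarrow> t \<in> tdists X \<Longrightarrow> \<exists>u\<in>tdists X. tle X t u \<and> t \<noteq> u"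
  unfolding EP_def by (elim conjE) (erule bspec)
lemma EP_dense: "EP X \<Longrightarrow> s \<in> tdists X \<Longrightarrow> t \<in> tdists X \<Longrightarrow> tle X s t \<Longrightarrow> s \<noteq> t \<Longrightarrow>
   \<exists>u\<in>tdists X. tle X s u \<and> s \<noteq> u \<and> tle X u t \<and> u \<noteq> t"
proof -
  assume a: "EP X" "s \<in> tdists X" "t \<in> tdists X" "tle X s t" "s \<noteq> t"
  from a(1) have "\<forall>s\<in>tdists X. \<forall>t\<in>tdists X. tle X s t \<and> s \<noteq> t \<longrightarrow>
        (\<exists>u\<in>tdists X. tle X s u \<and> s \<noteq> u \<and> tle X u t \<and> u \<noteq> t)"
    unfolding EP_def by (elim conjE)
  then show ?thesis using a(2-5) by blast
qed
lemma EP_pt: "EP X \<Longrightarrow> finite S \<Longrightarrow> S \<subseteq> tpts X \<Longrightarrow> (\<And>x. x\<in>S \<Longrightarrow> r x \<in> tdists X \<and> r x \<noteq> tzero X)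
  \<Longrightarrow> (\<And>x y. x\<in>S \<Longrightarrow> y\<in>S \<Longrightarrow> ultra X (r x) (r y) (tdist X x y)) \<Longrightarrow>
  \<exists>p\<in>tpts X. \<forall>x\<in>S. tdist X p x = r x"
proof -
  assume a: "EP X" "finite S" "S \<subseteq> tpts X" "(\<And>x. x\<in>S \<Longrightarrow> r x \<in> tdists X \<and> r x \<noteq> tzero X)"
     "(\<And>x y. x\<in>S \<Longrightarrow> y\<in>S \<Longrightarrow> ultra X (r x) (r y) (tdist X x y))"
  from a(1) have "\<forall>S r. finite S \<and> S \<subseteq> tpts X \<and> (\<forall>x\<in>S. r x \<in> tdists X \<and> r x \<noteq> tzero X) \<and>
        (\<forall>x\<in>S. \<forall>y\<in>S. ultra X (r x) (r y) (tdist X x y)) \<longrightarrow>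
        (\<exists>p\<in>tpts X. \<forall>x\<in>S. tdist X p x = r x)"
    unfolding EP_def by (elim conjE)
  then have "finite S \<and> S \<subseteq> tpts X \<and> (\<forall>x\<in>S. r x \<in> tdists X \<and> r x \<noteq> tzero X) \<and>
        (\<forall>x\<in>S. \<forall>y\<in>S. ultra X (r x) (r y) (tdist X x y)) \<longrightarrow>
        (\<exists>p\<in>tpts X. \<forall>x\<in>S. tdist X p x = r x)" by blast
  then show ?thesis using a(2-5) by blast
qed

lemma tsu_c:
  assumes "is_tsu X"
  shows tsu_c1: "\<forall>s\<in>tdists X. tle X s s"
  and tsu_c2: "\<forall>s\<in>tdists X. \<forall>t\<in>tdists X. tle X s t \<and> tle X t s \<longrightarrow> s = t"
  and tsu_c3: "\<forall>s\<in>tdists X. \<forall>t\<in>tdists X. \<forall>u\<in>tdists X. tle X s t \<and> tle X t u \<longrightarrow> tle X s u"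
  and tsu_c4: "\<forall>s\<in>tdists X. \<forall>t\<in>tdists X. tle X s t \<or> tle X t s"
  and tsu_c5: "tzero X \<in> tdists X"
  and tsu_c6: "\<forall>t\<in>tdists X. tle X (tzero X) t"
  and tsu_c7: "\<forall>x\<in>tpts X. \<forall>y\<in>tpts X. tdist X x y \<in> tdists X"
  and tsu_c8: "\<forall>x\<in>tpts X. \<forall>y\<in>tpts X. tdist X x y = tdist X y x"
  and tsu_c9: "\<forall>x\<in>tpts X. \<forall>y\<in>tpts X. tdist X x y = tzero X \<longleftrightarrow> x = y"
  and tsu_c10: "\<forall>x\<in>tpts X. \<forall>y\<in>tpts X. \<forall>z\<in>tpts X.
        tle X (tdist X x z) (tdist X x y) \<or> tle X (tdist X x z) (tdist X y z)"
  using assms unfolding is_tsu_def apply - apply (elim conjE, assumption)+ done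

context fixes X :: "('a,'b) tsu" assumes T: "is_tsu X"
begin
lemma t_refl: "s \<in> tdists X \<Longrightarrow> tle X s s" using tsu_c1[OF T] by blast
lemma t_antisym: "s \<in> tdists X \<Longrightarrow> t \<in> tdists X \<Longrightarrow> tle X s t \<Longrightarrow> tle X t s \<Longrightarrow> s = t"
  using tsu_c2[OF T] by blast
lemma t_trans: "s \<in> tdists X \<Longrightarrow> t \<in> tdists X \<Longrightarrow> u \<in> tdists X \<Longrightarrow> tle X s t \<Longrightarrow> tle X t u \<Longrightarrow> tle X s u"
  using tsu_c3[OF T] by blast
lemma t_total: "s \<in> tdists X \<Longrightarrow> t \<in> tdists X \<Longrightarrow> tle X s t \<or> tle X t s"
  using tsu_c4[OF T] by blast
lemma t_zero: "tzero X \<in> tdists X" using tsu_c5[OF T] .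
lemma t_zero_le: "t \<in> tdists X \<Longrightarrow> tle X (tzero X) t" using tsu_c6[OF T] by blast
lemma t_dist: "x \<in> tpts X \<Longrightarrow> y \<in> tpts X \<Longrightarrow> tdist X x y \<in> tdists X"
  using tsu_c7[OF T] by blast
lemma t_sym: "x \<in> tpts X \<Longrightarrow> y \<in> tpts X \<Longrightarrow> tdist X x y = tdist X y x"
  using tsu_c8[OF T] by blast
lemma t_dist0: "x \<in> tpts X \<Longrightarrow> y \<in> tpts X \<Longrightarrow> tdist X x y = tzero X \<longleftrightarrow> x = y"
  using tsu_c9[OF T] by blast
lemma t_self: "x \<in> tpts X \<Longrightarrow> tdist X x x = tzero X"
  using t_dist0 by blast
lemma t_tri: "x \<in> tpts X \<Longrightarrow> y \<in> tpts X \<Longrightarrow> z \<in> tpts X \<Longrightarrow>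
   tle X (tdist X x z) (tdist X x y) \<or> tle X (tdist X x z) (tdist X y z)"
  using tsu_c10[OF T] by blast
lemma t_ultra: "x \<in> tpts X \<Longrightarrow> y \<in> tpts X \<Longrightarrow> z \<in> tpts X \<Longrightarrow>
   ultra X (tdist X x y) (tdist X x z) (tdist X y z)"
proof -
  assume a: "x \<in> tpts X" "y \<in> tpts X" "z \<in> tpts X"
  have 1: "tle X (tdist X x y) (tdist X x z) \<or> tle X (tdist X x y) (tdist X y z)"
    using t_tri[of x z y] a t_sym[of z y] by auto
  have 2: "tle X (tdist X x z) (tdist X x y) \<or> tle X (tdist X x z) (tdist X y z)"
    using t_tri[of x y z] a by auto
  have 3: "tle X (tdist X y z) (tdist X x y) \<or> tle X (tdist X y z) (tdist X x z)"
    using t_tri[of y x z] a t_sym[of x y] by auto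
  show ?thesis using 1 2 3 unfolding ultra_def by blast
qed

lemma fin_max: "finite L \<Longrightarrow> L \<noteq> {} \<Longrightarrow> L \<subseteq> tdists X \<Longrightarrow> \<exists>m\<in>L. \<forall>t\<in>L. tle X t m"
proof (induction L rule: finite_ne_induct)
  case (singleton x) then show ?case using t_refl by auto
next
  case (insert x F)
  then obtain m where m: "m \<in> F" "\<forall>t\<in>F. tle X t m" by auto
  show ?case
  proof (cases "tle X x m")
    case True then show ?thesis using m by auto
  next
    case False
    then have mx: "tle X m x" using t_total[of x m] insert m by auto
    have "\<forall>t\<in>insert x F. tle X t x"
    proof
      fix t assume "t \<in> insert x F"
      then show "tle X t x"
      proof
        assume "t = x" then show ?thesis using t_refl insert by auto
      next
        assume "t \<in> F" then show ?thesis using t_trans[of t m x] m mx insert by auto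
      qed
    qed
    then show ?thesis by auto
  qed
qed

lemma fin_min: "finite L \<Longrightarrow> L \<noteq> {} \<Longrightarrow> L \<subseteq> tdists X \<Longrightarrow> \<exists>m\<in>L. \<forall>t\<in>L. tle X m t"
proof (induction L rule: finite_ne_induct)
  case (singleton x) then show ?case using t_refl by auto
next
  case (insert x F)
  then obtain m where m: "m \<in> F" "\<forall>t\<in>F. tle X m t" by auto
  show ?case
  proof (cases "tle X m x")
    case True then show ?thesis using m by auto
  next
    case False
    then have mx: "tle X x m" using t_total[of x m] insert m by auto
    have "\<forall>t\<in>insert x F. tle X x t"
    proof
      fix t assume "t \<in> insert x F"
      then show "tle X x t"
      proof
        assume "t = x" then show ?thesis using t_refl insert by auto
      next
        assume "t \<in> F" then show ?thesis using t_trans[of x m t] m mx insert by auto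
      qed
    qed
    then show ?thesis by auto
  qed
qed
end

section \<open>Abstract back and forth\<close>

definition bfstep where
  "bfstep A B Ok R n = (let R1 = (if A = {} then R else (SOME R'. Ok R' \<and> R \<subseteq> R' \<and> from_nat_into A n \<in> Domain R'))
     in (if B = {} then R1 else (SOME R''. Ok R'' \<and> R1 \<subseteq> R'' \<and> from_nat_into B n \<in> Range R'')))"

primrec bfseq where
  "bfseq A B Ok R0 0 = R0"
| "bfseq A B Ok R0 (Suc n) = bfstep A B Ok (bfseq A B Ok R0 n) n"

lemma bf_abstract:
  assumes cA: "countable A" and cB: "countable B" and R0: "Ok R0"
    and fw: "\<And>R a. Ok R \<Longrightarrow> a \<in> A \<Longrightarrow> \<exists>b. Ok (insert (a,b) R)"
    and bk: "\<And>R b. Ok R \<Longrightarrow> b \<in> B \<Longrightarrow> \<exists>a. Ok (insert (a,b) R)"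
  shows "\<exists>Rs. Rs 0 = R0 \<and> (\<forall>n. Ok (Rs n)) \<and> (\<forall>n. Rs n \<subseteq> Rs (Suc n)) \<and>
     (\<forall>a\<in>A. \<exists>n. a \<in> Domain (Rs n)) \<and> (\<forall>b\<in>B. \<exists>n. b \<in> Range (Rs n))"
proof -
  let ?Rs = "bfseq A B Ok R0"
  have step: "Ok (bfstep A B Ok R n) \<and> R \<subseteq> bfstep A B Ok R n \<and>
      (A \<noteq> {} \<longrightarrow> from_nat_into A n \<in> Domain (bfstep A B Ok R n)) \<and>
      (B \<noteq> {} \<longrightarrow> from_nat_into B n \<in> Range (bfstep A B Ok R n))" if okR: "Ok R" for R n
  proof -
    define R1 where "R1 = (if A = {} then R else (SOME R'. Ok R' \<and> R \<subseteq> R' \<and> from_nat_into A n \<in> Domain R'))"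
    have 1: "Ok R1 \<and> R \<subseteq> R1 \<and> (A \<noteq> {} \<longrightarrow> from_nat_into A n \<in> Domain R1)"
    proof (cases "A = {}")
      case True then show ?thesis using that by (simp add: R1_def)
    next
      case False
      then have "from_nat_into A n \<in> A" by (rule from_nat_into)
      then obtain b where "Ok (insert (from_nat_into A n, b) R)" using fw okR by blast
      then have "\<exists>R'. Ok R' \<and> R \<subseteq> R' \<and> from_nat_into A n \<in> Domain R'" by blast
      from someI_ex[OF this] show ?thesis unfolding R1_def using False by simp
    qed
    define R2 where "R2 = (if B = {} then R1 else (SOME R''. Ok R'' \<and> R1 \<subseteq> R'' \<and> from_nat_into B n \<in> Range R''))"
    have 2: "Ok R2 \<and> R1 \<subseteq> R2 \<and> (B \<noteq> {} \<longrightarrow> from_nat_into B n \<in> Range R2)"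
    proof (cases "B = {}")
      case True then show ?thesis using 1 by (simp add: R2_def)
    next
      case False
      then have "from_nat_into B n \<in> B" by (rule from_nat_into)
      then obtain a where "Ok (insert (a, from_nat_into B n) R1)" using bk 1 by blast
      then have "\<exists>R'. Ok R' \<and> R1 \<subseteq> R' \<and> from_nat_into B n \<in> Range R'" by blast
      from someI_ex[OF this] show ?thesis unfolding R2_def using False by simp
    qed
    have "bfstep A B Ok R n = R2" unfolding bfstep_def R1_def R2_def Let_def by simp
    then show ?thesis using 1 2 by blast
  qed
  have ok: "Ok (?Rs n)" for n by (induction n) (auto simp: R0 step)
  have mono: "?Rs n \<subseteq> ?Rs (Suc n)" for n using step[OF ok[of n], of n] by simp
  have dom: "\<exists>n. a \<in> Domain (?Rs n)" if aA: "a \<in> A" for a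
  proof -
    obtain n where "from_nat_into A n = a" using from_nat_into_surj[OF cA aA] by blast
    then show ?thesis using step[OF ok[of n], of n] aA by (intro exI[of _ "Suc n"]) auto
  qed
  have ran: "\<exists>n. b \<in> Range (?Rs n)" if bB: "b \<in> B" for b
  proof -
    obtain n where "from_nat_into B n = b" using from_nat_into_surj[OF cB bB] by blast
    then show ?thesis using step[OF ok[of n], of n] bB by (intro exI[of _ "Suc n"]) auto
  qed
  show ?thesis using ok mono dom ran by (intro exI[of _ ?Rs]) auto
qed

lemma chain_two:
  assumes "\<forall>n. (Rs::nat \<Rightarrow> 'x set) n \<subseteq> Rs (Suc n)" "p \<in> (\<Union>n. Rs n)" "q \<in> (\<Union>n. Rs n)"
  shows "\<exists>n. p \<in> Rs n \<and> q \<in> Rs n"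
proof -
  have m: "mono Rs" using assms(1) by (simp add: mono_iff_le_Suc)
  obtain i j where "p \<in> Rs i" "q \<in> Rs j" using assms by auto
  then show ?thesis using m[unfolded mono_def, rule_format, of i "max i j"]
      m[unfolded mono_def, rule_format, of j "max i j"] by (intro exI[of _ "max i j"]) auto
qed


definition oemb :: "('a,'b) tsu \<Rightarrow> ('c,'d) tsu \<Rightarrow> ('b \<Rightarrow> 'd) \<Rightarrow> 'b set \<Rightarrow> bool" where
  "oemb X Y g E \<longleftrightarrow> g ` E \<subseteq> tdists Y \<and> (\<forall>s\<in>E. \<forall>t\<in>E. tle Y (g s) (g t) \<longleftrightarrow> tle X s t)"

lemma oemb_le: "oemb X Y g E \<Longrightarrow> s \<in> E \<Longrightarrow> t \<in> E \<Longrightarrow> tle Y (g s) (g t) \<longleftrightarrow> tle X s t"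
  unfolding oemb_def by blast

lemma oemb_in: "oemb X Y g E \<Longrightarrow> s \<in> E \<Longrightarrow> g s \<in> tdists Y"
  unfolding oemb_def by blast

lemma oemb_inj: "is_tsu X \<Longrightarrow> oemb X Y g E \<Longrightarrow> E \<subseteq> tdists X \<Longrightarrow> inj_on g E"
  unfolding inj_on_def
proof (intro ballI impI)
  fix s t assume a: "is_tsu X" "oemb X Y g E" "E \<subseteq> tdists X" "s \<in> E" "t \<in> E" "g s = g t"
  have "g s \<in> tdists Y" using oemb_in a by metis
  then show "s = t" using t_antisym[OF a(1), of s t] a oemb_le[OF a(2), of s t] oemb_le[OF a(2), of t s]
    by (metis (no_types, lifting) in_mono oemb_le t_antisym t_refl)
qed

lemma oemb_ultra: "oemb X Y g E \<Longrightarrow> a \<in> E \<Longrightarrow> b \<in> E \<Longrightarrow> c \<in> E \<Longrightarrow> ultra X a b c \<Longrightarrow> ultra Y (g a) (g b) (g c)"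
  unfolding ultra_def using oemb_le by metis

section \<open>Phase 1: distances\<close>

definition okD :: "('a,'b) tsu \<Rightarrow> ('c,'d) tsu \<Rightarrow> ('b \<times> 'd) set \<Rightarrow> bool" where
  "okD X Y R \<longleftrightarrow> finite R \<and> R \<subseteq> tdists X \<times> tdists Y \<and> (tzero X, tzero Y) \<in> R \<and>
     (\<forall>p\<in>R. \<forall>q\<in>R. tle X (fst p) (fst q) \<longleftrightarrow> tle Y (snd p) (snd q))"

lemma okD_le: "okD X Y R \<Longrightarrow> (s,t) \<in> R \<Longrightarrow> (s',t') \<in> R \<Longrightarrow> tle X s s' \<longleftrightarrow> tle Y t t'"
proof -
  assume a: "okD X Y R" "(s,t) \<in> R" "(s',t') \<in> R"
  have "\<forall>p\<in>R. \<forall>q\<in>R. tle X (fst p) (fst q) \<longleftrightarrow> tle Y (snd p) (snd q)" using a(1) unfolding okD_def by blast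
  from bspec[OF bspec[OF this a(2)] a(3)] show ?thesis by simp
qed

lemma okD_sub: "okD X Y R \<Longrightarrow> (s,t) \<in> R \<Longrightarrow> s \<in> tdists X \<and> t \<in> tdists Y"
  unfolding okD_def by blast

lemma okD_conv: "okD X Y R \<Longrightarrow> okD Y X (R\<inverse>)"
proof -
  assume ok: "okD X Y R"
  have pw: "\<forall>p\<in>R\<inverse>. \<forall>q\<in>R\<inverse>. tle Y (fst p) (fst q) \<longleftrightarrow> tle X (snd p) (snd q)"
  proof (intro ballI)
    fix p q assume "p \<in> R\<inverse>" "q \<in> R\<inverse>"
    then obtain a b c d where "p = (a,b)" "q = (c,d)" "(b,a) \<in> R" "(d,c) \<in> R" by (cases p, cases q) auto
    then show "tle Y (fst p) (fst q) \<longleftrightarrow> tle X (snd p) (snd q)" using okD_le[OF ok, of b a d c] by simp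
  qed
  have "finite (R\<inverse>)" "R\<inverse> \<subseteq> tdists Y \<times> tdists X" "(tzero Y, tzero X) \<in> R\<inverse>"
    using ok unfolding okD_def by auto
  then show ?thesis using pw unfolding okD_def by blast
qed

lemma okD_insert:
  assumes TX: "is_tsu X" and TY: "is_tsu Y" and ok: "okD X Y R" and s: "s \<in> tdists X" and t: "t \<in> tdists Y"
    and nd: "s \<notin> Domain R"
    and c1: "\<And>s' t'. (s',t') \<in> R \<Longrightarrow> tle X s' s \<Longrightarrow> tle Y t' t \<and> t' \<noteq> t"
    and c2: "\<And>s' t'. (s',t') \<in> R \<Longrightarrow> tle X s s' \<Longrightarrow> tle Y t t' \<and> t \<noteq> t'"
  shows "okD X Y (insert (s,t) R)"
proof -
  have pw: "tle X (fst p) (fst q) \<longleftrightarrow> tle Y (snd p) (snd q)" if "p \<in> insert (s,t) R" "q \<in> insert (s,t) R" for p q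
  proof -
    have key: "tle X s s' \<longleftrightarrow> tle Y t t'" "tle X s' s \<longleftrightarrow> tle Y t' t" if "(s',t') \<in> R" for s' t'
    proof -
      have s': "s' \<in> tdists X" "t' \<in> tdists Y" using okD_sub[OF ok that] by auto
      have ne: "s' \<noteq> s" using nd that by blast
      show "tle X s s' \<longleftrightarrow> tle Y t t'"
      proof
        assume "tle X s s'" then show "tle Y t t'" using c2 that by blast
      next
        assume h: "tle Y t t'"
        show "tle X s s'"
        proof (rule ccontr)
          assume "\<not> tle X s s'"
          then have "tle X s' s" using t_total[OF TX s s'(1)] by blast
          then have "tle Y t' t" "t' \<noteq> t" using c1 that by blast+
          then show False using t_antisym[OF TY t s'(2)] h by blast
        qed
      qed
      show "tle X s' s \<longleftrightarrow> tle Y t' t"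
      proof
        assume "tle X s' s" then show "tle Y t' t" using c1 that by blast
      next
        assume h: "tle Y t' t"
        show "tle X s' s"
        proof (rule ccontr)
          assume "\<not> tle X s' s"
          then have "tle X s s'" using t_total[OF TX s s'(1)] by blast
          then have "tle Y t t'" "t \<noteq> t'" using c2 that by blast+
          then show False using t_antisym[OF TY t s'(2)] h by blast
        qed
      qed
    qed
    show ?thesis
    proof (cases "p = (s,t)")
      case True
      show ?thesis
      proof (cases "q = (s,t)")
        case True then show ?thesis using \<open>p = (s,t)\<close> t_refl[OF TX s] t_refl[OF TY t] by simp
      next
        case False then have "q \<in> R" using that by simp
        then show ?thesis using key[of "fst q" "snd q"] True by simp
      qed
    next
      case False then have pR: "p \<in> R" using that by simp
      show ?thesis
      proof (cases "q = (s,t)")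
        case True then show ?thesis using key[of "fst p" "snd p"] pR by simp
      next
        case False then have "q \<in> R" using that by simp
        then show ?thesis using pR ok unfolding okD_def by blast
      qed
    qed
  qed
  show ?thesis using ok s t pw unfolding okD_def by auto
qed

lemma okD_forth:
  assumes TX: "is_tsu X" and EY: "EP Y" and ok: "okD X Y R" and s: "s \<in> tdists X"
  shows "\<exists>t. okD X Y (insert (s,t) R)"
proof (cases "s \<in> Domain R")
  case True
  then obtain t where "(s,t) \<in> R" by blast
  then have "insert (s,t) R = R" by blast
  then show ?thesis using ok by metis
next
  case nd: False
  have TY: "is_tsu Y" using EY by (rule EP_tsu)
  have fR: "finite R" using ok unfolding okD_def by blast
  define L where "L = {t. \<exists>s'. (s',t) \<in> R \<and> tle X s' s}"
  define H where "H = {t. \<exists>s'. (s',t) \<in> R \<and> tle X s s'}"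
  have LR: "L \<subseteq> Range R" "H \<subseteq> Range R" unfolding L_def H_def by blast+
  have fL: "finite L" "finite H" using LR fR finite_Range finite_subset by blast+
  have LD: "L \<subseteq> tdists Y" "H \<subseteq> tdists Y" using LR ok unfolding okD_def by blast+
  have "tzero Y \<in> L" using ok t_zero_le[OF TX s] unfolding okD_def L_def by blast
  then have Lne: "L \<noteq> {}" by blast
  obtain m where m: "m \<in> L" "\<forall>t\<in>L. tle Y t m" using fin_max[OF TY fL(1) Lne LD(1)] by blast
  obtain sm where sm: "(sm,m) \<in> R" "tle X sm s" using m(1) unfolding L_def by blast
  have mD: "m \<in> tdists Y" using m LD by blast
  have smD: "sm \<in> tdists X" using okD_sub[OF ok sm(1)] by blast
  have goal: "\<exists>t. okD X Y (insert (s,t) R)" if tD: "t \<in> tdists Y" and mt: "tle Y m t" "m \<noteq> t"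
     and ht: "\<And>h. h \<in> H \<Longrightarrow> tle Y t h \<and> t \<noteq> h" for t
  proof -
    have c1: "tle Y t' t \<and> t' \<noteq> t" if "(s',t') \<in> R" "tle X s' s" for s' t'
    proof -
      have "t' \<in> L" using that unfolding L_def by blast
      then have tm: "tle Y t' m" using m by blast
      have t'D: "t' \<in> tdists Y" using okD_sub[OF ok that(1)] by blast
      have "tle Y t' t" using t_trans[OF TY t'D mD tD tm mt(1)] .
      moreover have "t' \<noteq> t" using t_antisym[OF TY mD tD mt(1)] tm mt(2) by blast
      ultimately show ?thesis by blast
    qed
    have c2: "tle Y t t' \<and> t \<noteq> t'" if "(s',t') \<in> R" "tle X s s'" for s' t'
    proof -
      have "t' \<in> H" unfolding H_def using that by blast
      then show ?thesis by (rule ht)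
    qed
    have "okD X Y (insert (s,t) R)"
    proof (rule okD_insert[OF TX TY ok s tD nd])
      fix s' t' assume "(s',t') \<in> R" "tle X s' s" then show "tle Y t' t \<and> t' \<noteq> t" by (rule c1)
    next
      fix s' t' assume "(s',t') \<in> R" "tle X s s'" then show "tle Y t t' \<and> t \<noteq> t'" by (rule c2)
    qed
    then show ?thesis by blast
  qed
  show ?thesis
  proof (cases "H = {}")
    case True
    obtain u where u: "u \<in> tdists Y" "tle Y m u" "m \<noteq> u" using EP_nomax[OF EY mD] by blast
    show ?thesis using goal[OF u] True by blast
  next
    case False
    obtain h where h: "h \<in> H" "\<forall>t\<in>H. tle Y h t" using fin_min[OF TY fL(2) False LD(2)] by blast
    obtain sh where sh: "(sh,h) \<in> R" "tle X s sh" using h(1) unfolding H_def by blast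
    have shD: "sh \<in> tdists X" using okD_sub[OF ok sh(1)] by blast
    have hD: "h \<in> tdists Y" using h LD by blast
    have "tle X sm sh" using t_trans[OF TX smD s shD sm(2) sh(2)] .
    then have mh: "tle Y m h" using okD_le[OF ok sm(1) sh(1)] by blast
    have mnh: "m \<noteq> h"
    proof
      assume "m = h"
      then have "tle X sh sm" using okD_le[OF ok sh(1) sm(1)] t_refl[OF TY hD] by blast
      then have "tle X sh s" using t_trans[OF TX shD smD s _ sm(2)] by blast
      then have "sh = s" using t_antisym[OF TX shD s] sh(2) by blast
      then show False using nd sh(1) by blast
    qed
    obtain u where u: "u \<in> tdists Y" "tle Y m u" "m \<noteq> u" "tle Y u h" "u \<noteq> h"
      using EP_dense[OF EY mD hD mh mnh] by blast
    have "tle Y u h' \<and> u \<noteq> h'" if "h' \<in> H" for h'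
    proof -
      have h'D: "h' \<in> tdists Y" using that LD by blast
      have hh: "tle Y h h'" using h that by blast
      have "tle Y u h'" using t_trans[OF TY u(1) hD h'D u(4) hh] .
      moreover have "u \<noteq> h'" using t_antisym[OF TY hD u(1) _ u(4)] hh u(5) by blast
      ultimately show ?thesis by blast
    qed
    then show ?thesis using goal[OF u(1-3)] by blast
  qed
qed

lemma okD_iter:
  assumes TX: "is_tsu X" and EY: "EP Y" and ok: "okD X Y R" and E: "finite E" "E \<subseteq> tdists X"
  shows "\<exists>R'. R \<subseteq> R' \<and> okD X Y R' \<and> E \<subseteq> Domain R'"
  using E
proof (induction E rule: finite_induct)
  case empty then show ?case using ok by blast
next
  case (insert x F)
  then obtain R' where R': "R \<subseteq> R'" "okD X Y R'" "F \<subseteq> Domain R'" by blast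
  obtain t where "okD X Y (insert (x,t) R')" using okD_forth[OF TX EY R'(2)] insert by blast
  then show ?case using R' by (intro exI[of _ "insert (x,t) R'"]) auto
qed

section \<open>Phase 2: points\<close>

definition okP :: "('a,'b) tsu \<Rightarrow> ('c,'d) tsu \<Rightarrow> ('b \<Rightarrow> 'd) \<Rightarrow> ('a \<times> 'c) set \<Rightarrow> bool" where
  "okP X Y G R \<longleftrightarrow> finite R \<and> R \<subseteq> tpts X \<times> tpts Y \<and>
     (\<forall>p\<in>R. \<forall>q\<in>R. tdist Y (snd p) (snd q) = G (tdist X (fst p) (fst q)))"

lemma okP_d: "okP X Y G R \<Longrightarrow> (x,y) \<in> R \<Longrightarrow> (x',y') \<in> R \<Longrightarrow> tdist Y y y' = G (tdist X x x')"
proof -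
  assume a: "okP X Y G R" "(x,y) \<in> R" "(x',y') \<in> R"
  have "\<forall>p\<in>R. \<forall>q\<in>R. tdist Y (snd p) (snd q) = G (tdist X (fst p) (fst q))" using a(1) unfolding okP_def by blast
  from bspec[OF bspec[OF this a(2)] a(3)] show ?thesis by simp
qed

lemma okP_sub: "okP X Y G R \<Longrightarrow> (x,y) \<in> R \<Longrightarrow> x \<in> tpts X \<and> y \<in> tpts Y"
  unfolding okP_def by blast

definition gmap :: "('a,'b) tsu \<Rightarrow> ('c,'d) tsu \<Rightarrow> ('b \<Rightarrow> 'd) \<Rightarrow> bool" where
  "gmap X Y G \<longleftrightarrow> oemb X Y G (tdists X) \<and> G (tzero X) = tzero Y"

lemma gmap_inj: "is_tsu X \<Longrightarrow> gmap X Y G \<Longrightarrow> inj_on G (tdists X)"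
  unfolding gmap_def using oemb_inj by blast

lemma gmap_zero: "is_tsu X \<Longrightarrow> gmap X Y G \<Longrightarrow> s \<in> tdists X \<Longrightarrow> G s = tzero Y \<longleftrightarrow> s = tzero X"
  using gmap_inj[of X Y G] t_zero[of X] unfolding gmap_def inj_on_def by metis

lemma okP_forth:
  assumes TX: "is_tsu X" and EY: "EP Y" and G: "gmap X Y G" and ok: "okP X Y G R" and x: "x \<in> tpts X"
  shows "\<exists>y. okP X Y G (insert (x,y) R)"
proof (cases "x \<in> Domain R")
  case True
  then obtain y where "(x,y) \<in> R" by blast
  then have "insert (x,y) R = R" by blast
  then show ?thesis using ok by metis
next
  case nd: False
  have TY: "is_tsu Y" using EY by (rule EP_tsu)
  have fR: "finite R" using ok unfolding okP_def by blast
  have Gin: "G s \<in> tdists Y" if "s \<in> tdists X" for s using G that unfolding gmap_def oemb_def by blast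
  have uniq: "x1 = x2" if "(x1,y') \<in> R" "(x2,y') \<in> R" for x1 x2 y'
  proof -
    have d: "x1 \<in> tpts X" "x2 \<in> tpts X" "y' \<in> tpts Y" using okP_sub[OF ok] that by blast+
    have "G (tdist X x1 x2) = tzero Y" using okP_d[OF ok that] t_self[OF TY d(3)] by simp
    then have "tdist X x1 x2 = tzero X" using gmap_zero[OF TX G t_dist[OF TX d(1,2)]] by blast
    then show ?thesis using t_dist0[OF TX d(1,2)] by blast
  qed
  define r where "r y' = G (tdist X x (SOME x'. (x',y') \<in> R))" for y'
  have rr: "r y' = G (tdist X x x')" if "(x',y') \<in> R" for x' y'
  proof -
    have "(SOME x'. (x',y') \<in> R) = x'" using uniq that by (metis (mono_tags, lifting) someI_ex)
    then show ?thesis unfolding r_def by simp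
  qed
  have "\<exists>p\<in>tpts Y. \<forall>y'\<in>Range R. tdist Y p y' = r y'"
  proof (rule EP_pt[OF EY])
    show "finite (Range R)" using fR by (simp add: finite_Range)
    show "Range R \<subseteq> tpts Y" using ok unfolding okP_def by blast
    fix y' assume "y' \<in> Range R"
    then obtain x' where x': "(x',y') \<in> R" by blast
    have x'P: "x' \<in> tpts X" using okP_sub[OF ok x'] by blast
    have "x' \<noteq> x" using nd x' by blast
    then have "tdist X x x' \<noteq> tzero X" using t_dist0[OF TX x x'P] by blast
    then show "r y' \<in> tdists Y \<and> r y' \<noteq> tzero Y"
      using rr[OF x'] Gin[OF t_dist[OF TX x x'P]] gmap_zero[OF TX G t_dist[OF TX x x'P]] by simp
  next
    fix y1 y2 assume "y1 \<in> Range R" "y2 \<in> Range R"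
    then obtain x1 x2 where x12: "(x1,y1) \<in> R" "(x2,y2) \<in> R" by blast
    have P: "x1 \<in> tpts X" "x2 \<in> tpts X" using okP_sub[OF ok] x12 by blast+
    have u: "ultra X (tdist X x x1) (tdist X x x2) (tdist X x1 x2)" using t_ultra[OF TX x P] .
    have "ultra Y (G (tdist X x x1)) (G (tdist X x x2)) (G (tdist X x1 x2))"
      by (rule oemb_ultra[OF _ _ _ _ u]) (use G TX x P t_dist in \<open>auto simp: gmap_def\<close>)
    then show "ultra Y (r y1) (r y2) (tdist Y y1 y2)"
      using rr[OF x12(1)] rr[OF x12(2)] okP_d[OF ok x12] by simp
  qed
  then obtain p where p: "p \<in> tpts Y" "\<forall>y'\<in>Range R. tdist Y p y' = r y'" by blast
  have pw: "tdist Y (snd a) (snd b) = G (tdist X (fst a) (fst b))" if "a \<in> insert (x,p) R" "b \<in> insert (x,p) R" for a b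
  proof -
    have k1: "tdist Y p y' = G (tdist X x x')" if "(x',y') \<in> R" for x' y'
    proof -
      have "y' \<in> Range R" using that by (rule RangeI)
      then show ?thesis using p(2) rr[OF that] by simp
    qed
    have k2: "tdist Y y' p = G (tdist X x' x)" if "(x',y') \<in> R" for x' y'
      using k1[OF that] t_sym[OF TY p(1)] t_sym[OF TX x] okP_sub[OF ok that] by metis
    have k0: "tdist Y p p = G (tdist X x x)"
      using t_self[OF TY p(1)] t_self[OF TX x] G unfolding gmap_def by simp
    show ?thesis
    proof (cases "a = (x,p)")
      case True
      then show ?thesis
      proof (cases "b = (x,p)")
        case True then show ?thesis using \<open>a = (x,p)\<close> k0 by simp
      next
        case False then show ?thesis using \<open>a = (x,p)\<close> that k1[of "fst b" "snd b"] by simp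
      qed
    next
      case False
      then have aR: "a \<in> R" using that by simp
      show ?thesis
      proof (cases "b = (x,p)")
        case True then show ?thesis using aR k2[of "fst a" "snd a"] by simp
      next
        case False then show ?thesis using aR that ok unfolding okP_def by auto
      qed
    qed
  qed
  have "okP X Y G (insert (x,p) R)" using ok x p(1) pw unfolding okP_def by auto
  then show ?thesis by blast
qed

lemma okP_iter:
  assumes TX: "is_tsu X" and EY: "EP Y" and G: "gmap X Y G" and ok: "okP X Y G R" and E: "finite E" "E \<subseteq> tpts X"
  shows "\<exists>R'. R \<subseteq> R' \<and> okP X Y G R' \<and> E \<subseteq> Domain R'"
  using E
proof (induction E rule: finite_induct)
  case empty then show ?case using ok by blast
next
  case (insert x F)
  then obtain R' where R': "R \<subseteq> R'" "okP X Y G R'" "F \<subseteq> Domain R'" by blast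
  obtain t where "okP X Y G (insert (x,t) R')" using okP_forth[OF TX EY G R'(2)] insert by blast
  then show ?case using R' by (intro exI[of _ "insert (x,t) R'"]) auto
qed

lemma gmap_inv:
  assumes TX: "is_tsu X" and TY: "is_tsu Y" and G: "gmap X Y G" and b: "bij_betw G (tdists X) (tdists Y)"
  shows "gmap Y X (inv_into (tdists X) G)"
proof -
  let ?H = "inv_into (tdists X) G"
  have H1: "?H t \<in> tdists X" "G (?H t) = t" if "t \<in> tdists Y" for t
    using b that by (auto simp: bij_betw_def inv_into_into f_inv_into_f)
  have "tle X (?H s) (?H t) \<longleftrightarrow> tle Y s t" if "s \<in> tdists Y" "t \<in> tdists Y" for s t
    using oemb_le[OF G[unfolded gmap_def, THEN conjunct1] H1(1)[OF that(1)] H1(1)[OF that(2)]] H1 that by simp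
  moreover have "?H (tzero Y) = tzero X"
    using G b t_zero[OF TX] unfolding gmap_def bij_betw_def by (metis inv_into_f_f)
  ultimately show ?thesis using H1 unfolding gmap_def oemb_def by auto
qed

lemma okP_conv:
  assumes TX: "is_tsu X" and TY: "is_tsu Y" and G: "gmap X Y G" and b: "bij_betw G (tdists X) (tdists Y)"
    and ok: "okP X Y G R"
  shows "okP Y X (inv_into (tdists X) G) (R\<inverse>)"
proof -
  have "tdist X x x' = inv_into (tdists X) G (tdist Y y y')" if "(x,y) \<in> R" "(x',y') \<in> R" for x y x' y'
  proof -
    have "x \<in> tpts X" "x' \<in> tpts X" using okP_sub[OF ok] that by blast+
    then have "tdist X x x' \<in> tdists X" using t_dist[OF TX] by blast
    then show ?thesis using okP_d[OF ok that] b unfolding bij_betw_def by (simp add: inv_into_f_f)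
  qed
  then show ?thesis using ok unfolding okP_def by auto
qed


definition rfun :: "('a \<times> 'b) set \<Rightarrow> 'a \<Rightarrow> 'b" where
  "rfun R a = (SOME b. (a,b) \<in> R)"

lemma rfun_eq: "(a,b) \<in> R \<Longrightarrow> (\<And>b'. (a,b') \<in> R \<Longrightarrow> b' = b) \<Longrightarrow> rfun R a = b"
  unfolding rfun_def by (metis (mono_tags, lifting) someI_ex)

lemma okD_fun: "is_tsu X \<Longrightarrow> is_tsu Y \<Longrightarrow> okD X Y R \<Longrightarrow> (s,t) \<in> R \<Longrightarrow> (s,t') \<in> R \<Longrightarrow> t' = t"
  by (metis okD_le okD_sub t_antisym t_refl)

lemma okP_fun: "is_tsu X \<Longrightarrow> is_tsu Y \<Longrightarrow> gmap X Y G \<Longrightarrow> okP X Y G R \<Longrightarrow> (x,y) \<in> R \<Longrightarrow> (x,y') \<in> R \<Longrightarrow> y' = y"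
proof -
  assume a: "is_tsu X" "is_tsu Y" "gmap X Y G" "okP X Y G R" "(x,y) \<in> R" "(x,y') \<in> R"
  have P: "x \<in> tpts X" "y \<in> tpts Y" "y' \<in> tpts Y" using okP_sub[OF a(4)] a(5,6) by blast+
  have "tdist Y y y' = G (tdist X x x)" using okP_d[OF a(4) a(5,6)] .
  also have "\<dots> = tzero Y" using t_self[OF a(1) P(1)] a(3) unfolding gmap_def by simp
  finally show ?thesis using t_dist0[OF a(2) P(2,3)] by simp
qed

lemma okP_conv2:
  assumes TX: "is_tsu X" and TY: "is_tsu Y" and b: "bij_betw G (tdists X) (tdists Y)"
    and ok: "okP Y X (inv_into (tdists X) G) R"
  shows "okP X Y G (R\<inverse>)"
proof -
  have "tdist Y y y' = G (tdist X x x')" if "(y,x) \<in> R" "(y',x') \<in> R" for x y x' y'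
  proof -
    have "y \<in> tpts Y" "y' \<in> tpts Y" using okP_sub[OF ok] that by blast+
    then have "tdist Y y y' \<in> tdists Y" using t_dist[OF TY] by blast
    then show ?thesis using okP_d[OF ok that] b unfolding bij_betw_def by (simp add: f_inv_into_f)
  qed
  then show ?thesis using ok unfolding okP_def by auto
qed

lemma bfD:
  assumes EX: "EP X" and EY: "EP Y" and cX: "countable (tdists X)" and cY: "countable (tdists Y)"
    and ok: "okD X Y R0"
  shows "\<exists>G. bij_betw G (tdists X) (tdists Y) \<and> gmap X Y G \<and> (\<forall>(s,t)\<in>R0. G s = t)"
proof -
  have TX: "is_tsu X" and TY: "is_tsu Y" using EX EY by (auto intro: EP_tsu)
  have fw: "\<exists>b. okD X Y (insert (a,b) R)" if "okD X Y R" "a \<in> tdists X" for R a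
    using okD_forth[OF TX EY that] .
  have bk: "\<exists>a. okD X Y (insert (a,b) R)" if h: "okD X Y R" "b \<in> tdists Y" for R b
  proof -
    obtain a where h2: "okD Y X (insert (b,a) (R\<inverse>))" using okD_forth[OF TY EX okD_conv[OF h(1)] h(2)] by blast
    have eq: "(insert (b,a) (R\<inverse>))\<inverse> = insert (a,b) R" by auto
    have "okD X Y (insert (a,b) R)" using okD_conv[OF h2] unfolding eq .
    then show ?thesis by blast
  qed
  obtain Rs where Rs: "Rs 0 = R0" "\<forall>n. okD X Y (Rs n)" "\<forall>n. Rs n \<subseteq> Rs (Suc n)"
    "\<forall>a\<in>tdists X. \<exists>n. a \<in> Domain (Rs n)" "\<forall>b\<in>tdists Y. \<exists>n. b \<in> Range (Rs n)"
    using bf_abstract[of "tdists X" "tdists Y" "okD X Y" R0, OF cX cY ok fw bk] by blast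
  define RR where "RR = (\<Union>n. Rs n)"
  have two: "\<exists>n. p \<in> Rs n \<and> q \<in> Rs n" if "p \<in> RR" "q \<in> RR" for p q
    using chain_two[OF Rs(3)] that unfolding RR_def by blast
  have le: "tle X s s' \<longleftrightarrow> tle Y t t'" if h: "(s,t) \<in> RR" "(s',t') \<in> RR" for s t s' t'
  proof -
    obtain n where "(s,t) \<in> Rs n" "(s',t') \<in> Rs n" using two[OF h] by blast
    then show ?thesis using okD_le[OF Rs(2)[rule_format, of n]] by blast
  qed
  have sub: "s \<in> tdists X \<and> t \<in> tdists Y" if h: "(s,t) \<in> RR" for s t
  proof -
    obtain n where "(s,t) \<in> Rs n" using h unfolding RR_def by blast
    then show ?thesis using okD_sub[OF Rs(2)[rule_format, of n]] by blast
  qed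
  have fn: "t' = t" if h: "(s,t) \<in> RR" "(s,t') \<in> RR" for s t t'
  proof -
    obtain n where "(s,t) \<in> Rs n" "(s,t') \<in> Rs n" using two[OF h] by blast
    then show ?thesis using okD_fun[OF TX TY Rs(2)[rule_format, of n]] by blast
  qed
  define G where "G = rfun RR"
  have Gs: "G s = t" if "(s,t) \<in> RR" for s t unfolding G_def using rfun_eq[OF that] fn[OF that] by blast
  have dom: "(s, G s) \<in> RR" if h: "s \<in> tdists X" for s
  proof -
    obtain t where "(s,t) \<in> RR" using Rs(4) h unfolding RR_def by blast
    then show ?thesis using Gs by simp
  qed
  have oe: "oemb X Y G (tdists X)" unfolding oemb_def
  proof
    show "G ` tdists X \<subseteq> tdists Y" using dom sub by blast
    show "\<forall>s\<in>tdists X. \<forall>t\<in>tdists X. tle Y (G s) (G t) = tle X s t"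
    proof (intro ballI)
      fix s t assume "s \<in> tdists X" "t \<in> tdists X"
      then show "tle Y (G s) (G t) = tle X s t" using le[OF dom dom] by blast
    qed
  qed
  have R0RR: "R0 \<subseteq> RR" unfolding RR_def using Rs(1) by blast
  have z: "G (tzero X) = tzero Y" using Gs R0RR ok unfolding okD_def by blast
  have gm: "gmap X Y G" using oe z unfolding gmap_def by blast
  have "G ` tdists X = tdists Y"
  proof
    show "G ` tdists X \<subseteq> tdists Y" using oe unfolding oemb_def by blast
    show "tdists Y \<subseteq> G ` tdists X"
    proof
      fix t assume "t \<in> tdists Y"
      then obtain s where "(s,t) \<in> RR" using Rs(5) unfolding RR_def by blast
      then show "t \<in> G ` tdists X" using Gs sub by blast
    qed
  qed
  then have "bij_betw G (tdists X) (tdists Y)" using gmap_inj[OF TX gm] unfolding bij_betw_def by blast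
  moreover have "\<forall>(s,t)\<in>R0. G s = t" using Gs R0RR by blast
  ultimately show ?thesis using gm by blast
qed

lemma bfP:
  assumes EX: "EP X" and EY: "EP Y" and cX: "countable (tpts X)" and cY: "countable (tpts Y)"
    and G: "gmap X Y G" and bG: "bij_betw G (tdists X) (tdists Y)" and ok: "okP X Y G R0"
  shows "\<exists>F. bij_betw F (tpts X) (tpts Y) \<and> (\<forall>x\<in>tpts X. \<forall>x'\<in>tpts X. tdist Y (F x) (F x') = G (tdist X x x'))
     \<and> (\<forall>(x,y)\<in>R0. F x = y)"
proof -
  have TX: "is_tsu X" and TY: "is_tsu Y" using EX EY by (auto intro: EP_tsu)
  have fw: "\<exists>b. okP X Y G (insert (a,b) R)" if "okP X Y G R" "a \<in> tpts X" for R a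
    using okP_forth[OF TX EY G that] .
  have H: "gmap Y X (inv_into (tdists X) G)" using gmap_inv[OF TX TY G bG] .
  have bk: "\<exists>a. okP X Y G (insert (a,b) R)" if h: "okP X Y G R" "b \<in> tpts Y" for R b
  proof -
    obtain a where h2: "okP Y X (inv_into (tdists X) G) (insert (b,a) (R\<inverse>))"
      using okP_forth[OF TY EX H okP_conv[OF TX TY G bG h(1)] h(2)] by blast
    have eq: "(insert (b,a) (R\<inverse>))\<inverse> = insert (a,b) R" by auto
    have "okP X Y G (insert (a,b) R)" using okP_conv2[OF TX TY bG h2] unfolding eq .
    then show ?thesis by blast
  qed
  obtain Rs where Rs: "Rs 0 = R0" "\<forall>n. okP X Y G (Rs n)" "\<forall>n. Rs n \<subseteq> Rs (Suc n)"
    "\<forall>a\<in>tpts X. \<exists>n. a \<in> Domain (Rs n)" "\<forall>b\<in>tpts Y. \<exists>n. b \<in> Range (Rs n)"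
    using bf_abstract[of "tpts X" "tpts Y" "okP X Y G" R0, OF cX cY ok fw bk] by blast
  define RR where "RR = (\<Union>n. Rs n)"
  have two: "\<exists>n. p \<in> Rs n \<and> q \<in> Rs n" if "p \<in> RR" "q \<in> RR" for p q
    using chain_two[OF Rs(3)] that unfolding RR_def by blast
  have dd: "tdist Y y y' = G (tdist X x x')" if h: "(x,y) \<in> RR" "(x',y') \<in> RR" for x y x' y'
  proof -
    obtain n where "(x,y) \<in> Rs n" "(x',y') \<in> Rs n" using two[OF h] by blast
    then show ?thesis using okP_d[OF Rs(2)[rule_format, of n]] by blast
  qed
  have sub: "x \<in> tpts X \<and> y \<in> tpts Y" if h: "(x,y) \<in> RR" for x y
  proof -
    obtain n where "(x,y) \<in> Rs n" using h unfolding RR_def by blast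
    then show ?thesis using okP_sub[OF Rs(2)[rule_format, of n]] by blast
  qed
  have fn: "y' = y" if h: "(x,y) \<in> RR" "(x,y') \<in> RR" for x y y'
  proof -
    obtain n where "(x,y) \<in> Rs n" "(x,y') \<in> Rs n" using two[OF h] by blast
    then show ?thesis using okP_fun[OF TX TY G Rs(2)[rule_format, of n]] by blast
  qed
  define F where "F = rfun RR"
  have Fs: "F x = y" if "(x,y) \<in> RR" for x y unfolding F_def using rfun_eq[OF that] fn[OF that] by blast
  have dom: "(x, F x) \<in> RR" if h: "x \<in> tpts X" for x
  proof -
    obtain y where "(x,y) \<in> RR" using Rs(4) h unfolding RR_def by blast
    then show ?thesis using Fs by simp
  qed
  have dist: "\<forall>x\<in>tpts X. \<forall>x'\<in>tpts X. tdist Y (F x) (F x') = G (tdist X x x')" using dom dd by blast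
  have inj: "inj_on F (tpts X)"
  proof (rule inj_onI)
    fix x x' assume a: "x \<in> tpts X" "x' \<in> tpts X" "F x = F x'"
    have "F x \<in> tpts Y" using sub dom a by blast
    then have "G (tdist X x x') = tzero Y" using dist a t_self[OF TY] by metis
    then have "tdist X x x' = tzero X" using gmap_zero[OF TX G t_dist[OF TX a(1,2)]] by blast
    then show "x = x'" using t_dist0[OF TX a(1,2)] by blast
  qed
  have "F ` tpts X = tpts Y"
  proof
    show "F ` tpts X \<subseteq> tpts Y" using dom sub by blast
    show "tpts Y \<subseteq> F ` tpts X"
    proof
      fix y assume "y \<in> tpts Y"
      then obtain x where "(x,y) \<in> RR" using Rs(5) unfolding RR_def by blast
      then show "y \<in> F ` tpts X" using Fs sub by blast
    qed
  qed
  then have "bij_betw F (tpts X) (tpts Y)" using inj unfolding bij_betw_def by blast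
  moreover have "\<forall>(x,y)\<in>R0. F x = y" using Fs Rs(1) unfolding RR_def by blast
  ultimately show ?thesis using dist by blast
qed

definition pdata :: "('a,'b) tsu \<Rightarrow> ('c,'d) tsu \<Rightarrow> 'a set \<Rightarrow> 'b set \<Rightarrow> ('a \<Rightarrow> 'c) \<Rightarrow> ('b \<Rightarrow> 'd) \<Rightarrow> bool" where
  "pdata X Y S0 E0 f0 g0 \<longleftrightarrow> finite S0 \<and> finite E0 \<and> S0 \<subseteq> tpts X \<and> E0 \<subseteq> tdists X \<and> tzero X \<in> E0 \<and>
     g0 (tzero X) = tzero Y \<and> oemb X Y g0 E0 \<and> f0 ` S0 \<subseteq> tpts Y \<and>
     (\<forall>x\<in>S0. \<forall>y\<in>S0. tdist X x y \<in> E0 \<and> tdist Y (f0 x) (f0 y) = g0 (tdist X x y))"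

lemma pdata_okD: "pdata X Y S0 E0 f0 g0 \<Longrightarrow> okD X Y ((\<lambda>t. (t, g0 t)) ` E0)"
  unfolding pdata_def okD_def oemb_def by auto

lemma pdata_okP: "pdata X Y S0 E0 f0 g0 \<Longrightarrow> (\<forall>t\<in>E0. G t = g0 t) \<Longrightarrow> okP X Y G ((\<lambda>x. (x, f0 x)) ` S0)"
  unfolding pdata_def okP_def by auto

lemma gmap_dc_iso:
  assumes "gmap X Y G" "bij_betw G (tdists X) (tdists Y)" "bij_betw F (tpts X) (tpts Y)"
    "\<forall>x\<in>tpts X. \<forall>x'\<in>tpts X. tdist Y (F x) (F x') = G (tdist X x x')"
  shows "dc_iso X Y F G"
  using assms unfolding dc_iso_def dc_emb_def gmap_def oemb_def bij_betw_def by blast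

lemma bf_iso:
  assumes EX: "EP X" and EY: "EP Y" and c: "countable (tpts X)" "countable (tdists X)"
    "countable (tpts Y)" "countable (tdists Y)" and pd: "pdata X Y S0 E0 f0 g0"
  shows "\<exists>F G. dc_iso X Y F G \<and> (\<forall>x\<in>S0. F x = f0 x) \<and> (\<forall>t\<in>E0. G t = g0 t)"
proof -
  obtain G where G: "bij_betw G (tdists X) (tdists Y)" "gmap X Y G" "\<forall>(s,t)\<in>(\<lambda>t. (t, g0 t)) ` E0. G s = t"
    using bfD[OF EX EY c(2) c(4) pdata_okD[OF pd]] by blast
  have GE: "\<forall>t\<in>E0. G t = g0 t" using G(3) by auto
  obtain F where F: "bij_betw F (tpts X) (tpts Y)"
    "\<forall>x\<in>tpts X. \<forall>x'\<in>tpts X. tdist Y (F x) (F x') = G (tdist X x x')"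
    "\<forall>(x,y)\<in>(\<lambda>x. (x, f0 x)) ` S0. F x = y"
    using bfP[OF EX EY c(1) c(3) G(2) G(1) pdata_okP[OF pd GE]] by blast
  have "\<forall>x\<in>S0. F x = f0 x" using F(3) by auto
  then show ?thesis using gmap_dc_iso[OF G(2) G(1) F(1) F(2)] GE by blast
qed

lemma gmap_id: "is_tsu X \<Longrightarrow> gmap X X id"
  unfolding gmap_def oemb_def using t_zero by auto

lemma bf_isometry:
  assumes EX: "EP X" and c: "countable (tpts X)" and ok: "okP X X id R0"
  shows "\<exists>F. bij_betw F (tpts X) (tpts X) \<and> (\<forall>x\<in>tpts X. \<forall>x'\<in>tpts X. tdist X (F x) (F x') = tdist X x x')
     \<and> (\<forall>(x,y)\<in>R0. F x = y)"
  using bfP[OF EX EX c c gmap_id[OF EP_tsu[OF EX]] _ ok] by (simp add: bij_betw_id)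

lemma emb_ext:
  assumes TX: "is_tsu X" and fin: "finite (tpts X)" "finite (tdists X)" and EY: "EP Y"
    and pd: "pdata X Y S0 E0 f0 g0"
  shows "\<exists>f g. dc_emb X Y f g \<and> (\<forall>x\<in>S0. f x = f0 x) \<and> (\<forall>t\<in>E0. g t = g0 t)"
proof -
  have TY: "is_tsu Y" using EY by (rule EP_tsu)
  obtain R where R: "(\<lambda>t. (t, g0 t)) ` E0 \<subseteq> R" "okD X Y R" "tdists X \<subseteq> Domain R"
    using okD_iter[OF TX EY pdata_okD[OF pd] fin(2)] by blast
  define g where "g = rfun R"
  have gs: "g s = t" if "(s,t) \<in> R" for s t
    unfolding g_def using rfun_eq[OF that] okD_fun[OF TX TY R(2) that] by blast
  have dom: "(s, g s) \<in> R" if h: "s \<in> tdists X" for s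
  proof -
    obtain t where "(s,t) \<in> R" using R(3) h by blast
    then show ?thesis using gs by simp
  qed
  have GE: "\<forall>t\<in>E0. g t = g0 t" using gs R(1) by blast
  have oe: "oemb X Y g (tdists X)" unfolding oemb_def using dom okD_sub[OF R(2)] okD_le[OF R(2)] by blast
  have "tzero X \<in> E0" "g0 (tzero X) = tzero Y" using pd unfolding pdata_def by blast+
  then have gm: "gmap X Y g" using oe GE unfolding gmap_def by simp
  obtain R' where R': "(\<lambda>x. (x, f0 x)) ` S0 \<subseteq> R'" "okP X Y g R'" "tpts X \<subseteq> Domain R'"
    using okP_iter[OF TX EY gm pdata_okP[OF pd GE] fin(1)] by blast
  define f where "f = rfun R'"
  have fs: "f x = y" if "(x,y) \<in> R'" for x y
    unfolding f_def using rfun_eq[OF that] okP_fun[OF TX TY gm R'(2) that] by blast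
  have domf: "(x, f x) \<in> R'" if h: "x \<in> tpts X" for x
  proof -
    obtain y where "(x,y) \<in> R'" using R'(3) h by blast
    then show ?thesis using fs by simp
  qed
  have dist: "\<forall>x\<in>tpts X. \<forall>x'\<in>tpts X. tdist Y (f x) (f x') = g (tdist X x x')"
    using domf okP_d[OF R'(2)] by blast
  have inj: "inj_on f (tpts X)"
  proof (rule inj_onI)
    fix x x' assume a: "x \<in> tpts X" "x' \<in> tpts X" "f x = f x'"
    have "f x \<in> tpts Y" using okP_sub[OF R'(2)] domf a by blast
    then have "g (tdist X x x') = tzero Y" using dist a t_self[OF TY] by metis
    then have "tdist X x x' = tzero X" using gmap_zero[OF TX gm t_dist[OF TX a(1,2)]] by blast
    then show "x = x'" using t_dist0[OF TX a(1,2)] by blast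
  qed
  have "f ` tpts X \<subseteq> tpts Y" using okP_sub[OF R'(2)] domf by blast
  then have "dc_emb X Y f g" using inj dist gm unfolding dc_emb_def gmap_def oemb_def by blast
  moreover have "\<forall>x\<in>S0. f x = f0 x" using fs R'(1) by blast
  ultimately show ?thesis using GE by blast
qed


lemma is_tsuI:
  assumes "\<forall>s\<in>tdists X. tle X s s"
  and "\<forall>s\<in>tdists X. \<forall>t\<in>tdists X. tle X s t \<and> tle X t s \<longrightarrow> s = t"
  and "\<forall>s\<in>tdists X. \<forall>t\<in>tdists X. \<forall>u\<in>tdists X. tle X s t \<and> tle X t u \<longrightarrow> tle X s u"
  and "\<forall>s\<in>tdists X. \<forall>t\<in>tdists X. tle X s t \<or> tle X t s"
  and "tzero X \<in> tdists X"
  and "\<forall>t\<in>tdists X. tle X (tzero X) t"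
  and "\<forall>x\<in>tpts X. \<forall>y\<in>tpts X. tdist X x y \<in> tdists X"
  and "\<forall>x\<in>tpts X. \<forall>y\<in>tpts X. tdist X x y = tdist X y x"
  and "\<forall>x\<in>tpts X. \<forall>y\<in>tpts X. tdist X x y = tzero X \<longleftrightarrow> x = y"
  and "\<forall>x\<in>tpts X. \<forall>y\<in>tpts X. \<forall>z\<in>tpts X.
        tle X (tdist X x z) (tdist X x y) \<or> tle X (tdist X x z) (tdist X y z)"
  shows "is_tsu X"
  using assms unfolding is_tsu_def apply - apply (intro conjI) apply assumption+ done

definition subs :: "('a,'b) tsu \<Rightarrow> 'a set \<Rightarrow> 'b set \<Rightarrow> ('a,'b) tsu" where
  "subs Y S E = Y\<lparr>tpts := S, tdists := E\<rparr>"

lemma subs_sel[simp]: "tpts (subs Y S E) = S" "tdists (subs Y S E) = E" "tle (subs Y S E) = tle Y"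
  "tzero (subs Y S E) = tzero Y" "tdist (subs Y S E) = tdist Y"
  unfolding subs_def by simp_all

definition closed :: "('a,'b) tsu \<Rightarrow> 'a set \<Rightarrow> 'b set \<Rightarrow> bool" where
  "closed Y S E \<longleftrightarrow> S \<subseteq> tpts Y \<and> E \<subseteq> tdists Y \<and> tzero Y \<in> E \<and> (\<forall>x\<in>S. \<forall>y\<in>S. tdist Y x y \<in> E)"

lemma subs_tsu:
  assumes T: "is_tsu Y" and c: "closed Y S E"
  shows "is_tsu (subs Y S E)"
proof -
  have S: "S \<subseteq> tpts Y" and E: "E \<subseteq> tdists Y" and z: "tzero Y \<in> E" and d: "\<forall>x\<in>S. \<forall>y\<in>S. tdist Y x y \<in> E"
    using c unfolding closed_def by blast+
  show ?thesis
  proof (rule is_tsuI, simp_all only: subs_sel)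
    show "\<forall>s\<in>E. tle Y s s" using t_refl[OF T] E by blast
    show "\<forall>s\<in>E. \<forall>t\<in>E. tle Y s t \<and> tle Y t s \<longrightarrow> s = t" using t_antisym[OF T] E by blast
    show "\<forall>s\<in>E. \<forall>t\<in>E. \<forall>u\<in>E. tle Y s t \<and> tle Y t u \<longrightarrow> tle Y s u"
    proof (intro ballI impI)
      fix s t u assume "s \<in> E" "t \<in> E" "u \<in> E" "tle Y s t \<and> tle Y t u"
      then show "tle Y s u" using t_trans[OF T, of s t u] E by blast
    qed
    show "\<forall>s\<in>E. \<forall>t\<in>E. tle Y s t \<or> tle Y t s" using t_total[OF T] E by blast
    show "tzero Y \<in> E" by (rule z)
    show "\<forall>t\<in>E. tle Y (tzero Y) t" using t_zero_le[OF T] E by blast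
    show "\<forall>x\<in>S. \<forall>y\<in>S. tdist Y x y \<in> E" by (rule d)
    show "\<forall>x\<in>S. \<forall>y\<in>S. tdist Y x y = tdist Y y x" using t_sym[OF T] S by blast
    show "\<forall>x\<in>S. \<forall>y\<in>S. tdist Y x y = tzero Y \<longleftrightarrow> x = y" using t_dist0[OF T] S by blast
    show "\<forall>x\<in>S. \<forall>y\<in>S. \<forall>z\<in>S. tle Y (tdist Y x z) (tdist Y x y) \<or> tle Y (tdist Y x z) (tdist Y y z)"
    proof (intro ballI)
      fix x y z assume "x \<in> S" "y \<in> S" "z \<in> S"
      then show "tle Y (tdist Y x z) (tdist Y x y) \<or> tle Y (tdist Y x z) (tdist Y y z)"
        using t_tri[OF T, of x y z] S by blast
    qed
  qed
qed

lemma subs_emb: "closed Y S E \<Longrightarrow> dc_emb (subs Y S E) Y id id"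
  unfolding dc_emb_def closed_def subs_sel by simp

lemma subs_sub: "is_tsu Y \<Longrightarrow> closed Y S E \<Longrightarrow> substructure (subs Y S E) Y"
proof -
  assume a: "is_tsu Y" "closed Y S E"
  have "is_tsu (subs Y S E)" "dc_emb (subs Y S E) Y id id" using subs_tsu[OF a] subs_emb[OF a(2)] by blast+
  moreover have "S \<subseteq> tpts Y" "E \<subseteq> tdists Y" using a(2) unfolding closed_def by blast+
  ultimately show ?thesis unfolding substructure_def subs_sel by blast
qed

lemma subs_fin: "is_tsu Y \<Longrightarrow> closed Y S E \<Longrightarrow> finite S \<Longrightarrow> finite E \<Longrightarrow> finite_tsu (subs Y S E)"
  unfolding finite_tsu_def subs_sel using subs_tsu by blast

lemma subs_sub2: "is_tsu Y \<Longrightarrow> closed Y S E \<Longrightarrow> S \<subseteq> S' \<Longrightarrow> E \<subseteq> E' \<Longrightarrow> substructure (subs Y S E) (subs Y S' E')"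
proof -
  assume a: "is_tsu Y" "closed Y S E" "S \<subseteq> S'" "E \<subseteq> E'"
  have "dc_emb (subs Y S E) (subs Y S' E') id id" using a(3,4) unfolding dc_emb_def subs_sel by simp
  then show ?thesis using subs_tsu[OF a(1,2)] a(3,4) unfolding substructure_def subs_sel by blast
qed

lemma dc_emb_subs: "dc_emb X Y f g \<Longrightarrow> f ` tpts X \<subseteq> S \<Longrightarrow> g ` tdists X \<subseteq> E \<Longrightarrow> dc_emb X (subs Y S E) f g"
  unfolding dc_emb_def subs_sel by blast

lemma img_closed: "is_tsu X \<Longrightarrow> dc_emb X Y f g \<Longrightarrow> closed Y (f ` tpts X) (g ` tdists X)"
proof -
  assume T: "is_tsu X" and e: "dc_emb X Y f g"
  have 1: "f ` tpts X \<subseteq> tpts Y" "g ` tdists X \<subseteq> tdists Y" "g (tzero X) = tzero Y"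
    "\<forall>x\<in>tpts X. \<forall>x'\<in>tpts X. tdist Y (f x) (f x') = g (tdist X x x')"
    using e unfolding dc_emb_def by blast+
  have "tzero Y \<in> g ` tdists X" using 1(3) t_zero[OF T] by (metis imageI)
  moreover have "\<forall>x\<in>f ` tpts X. \<forall>y\<in>f ` tpts X. tdist Y x y \<in> g ` tdists X"
    using 1(4) t_dist[OF T] by fastforce
  ultimately show ?thesis using 1 unfolding closed_def by blast
qed

lemma img_iso: "is_tsu X \<Longrightarrow> dc_emb X Y f g \<Longrightarrow> dc_iso X (subs Y (f ` tpts X) (g ` tdists X)) f g"
proof -
  assume T: "is_tsu X" and e: "dc_emb X Y f g"
  have ig: "inj_on g (tdists X)"
  proof (rule inj_onI)
    fix s t assume a: "s \<in> tdists X" "t \<in> tdists X" "g s = g t"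
    have "\<forall>s\<in>tdists X. \<forall>t\<in>tdists X. tle Y (g s) (g t) \<longleftrightarrow> tle X s t" using e unfolding dc_emb_def by blast
    then have "tle X s t" "tle X t s" using a t_refl[OF T] by metis+
    then show "s = t" using t_antisym[OF T a(1,2)] by blast
  qed
  have i: "inj_on f (tpts X)" using e unfolding dc_emb_def by blast
  have "dc_emb X (subs Y (f ` tpts X) (g ` tdists X)) f g" using dc_emb_subs[OF e] by blast
  moreover have "bij_betw f (tpts X) (f ` tpts X)" "bij_betw g (tdists X) (g ` tdists X)"
    using i ig by (simp_all add: bij_betw_imageI)
  ultimately show ?thesis unfolding dc_iso_def subs_sel by blast
qed

lemma dc_emb_comp: "dc_emb X Y f g \<Longrightarrow> dc_emb Y Z f' g' \<Longrightarrow> dc_emb X Z (f' \<circ> f) (g' \<circ> g)"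
proof -
  assume e1: "dc_emb X Y f g" and e2: "dc_emb Y Z f' g'"
  have i: "inj_on (f' \<circ> f) (tpts X)"
    using e1 e2 unfolding dc_emb_def by (meson comp_inj_on inj_on_subset)
  have o: "tle Z (g' (g s)) (g' (g t)) \<longleftrightarrow> tle X s t" if "s \<in> tdists X" "t \<in> tdists X" for s t
  proof -
    have "g s \<in> tdists Y" "g t \<in> tdists Y" using e1 that unfolding dc_emb_def by blast+
    then have "tle Z (g' (g s)) (g' (g t)) \<longleftrightarrow> tle Y (g s) (g t)" using e2 unfolding dc_emb_def by blast
    also have "\<dots> \<longleftrightarrow> tle X s t" using e1 that unfolding dc_emb_def by blast
    finally show ?thesis .
  qed
  have d: "tdist Z (f' (f x)) (f' (f x')) = g' (g (tdist X x x'))" if "x \<in> tpts X" "x' \<in> tpts X" for x x'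
  proof -
    have "f x \<in> tpts Y" "f x' \<in> tpts Y" using e1 that unfolding dc_emb_def by blast+
    then have "tdist Z (f' (f x)) (f' (f x')) = g' (tdist Y (f x) (f x'))" using e2 unfolding dc_emb_def by blast
    also have "\<dots> = g' (g (tdist X x x'))" using e1 that unfolding dc_emb_def by simp
    finally show ?thesis .
  qed
  have "(f' \<circ> f) ` tpts X \<subseteq> tpts Z" "(g' \<circ> g) ` tdists X \<subseteq> tdists Z" "g' (g (tzero X)) = tzero Z"
    using e1 e2 unfolding dc_emb_def by (auto simp: image_subset_iff)
  then show ?thesis using i o d unfolding dc_emb_def by simp
qed

lemma dc_iso_emb: "dc_iso X Y f g \<Longrightarrow> dc_emb X Y f g" unfolding dc_iso_def by blast

lemma dc_iso_inv:
  assumes T: "is_tsu X" and i: "dc_iso X Y f g"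
  shows "dc_iso Y X (inv_into (tpts X) f) (inv_into (tdists X) g)"
proof -
  have bf: "bij_betw f (tpts X) (tpts Y)" and bg: "bij_betw g (tdists X) (tdists Y)" and e: "dc_emb X Y f g"
    using i unfolding dc_iso_def by blast+
  let ?f = "inv_into (tpts X) f" and ?g = "inv_into (tdists X) g"
  have bf': "bij_betw ?f (tpts Y) (tpts X)" using bij_betw_inv_into[OF bf] .
  have bg': "bij_betw ?g (tdists Y) (tdists X)" using bij_betw_inv_into[OF bg] .
  have ff: "f (?f y) = y" if "y \<in> tpts Y" for y using bf that by (simp add: bij_betw_def f_inv_into_f)
  have gg: "g (?g t) = t" if "t \<in> tdists Y" for t using bg that by (simp add: bij_betw_def f_inv_into_f)
  have fin: "?f y \<in> tpts X" if "y \<in> tpts Y" for y using bf' that unfolding bij_betw_def by blast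
  have gin: "?g t \<in> tdists X" if "t \<in> tdists Y" for t using bg' that unfolding bij_betw_def by blast
  have ord: "tle X (?g s) (?g t) \<longleftrightarrow> tle Y s t" if "s \<in> tdists Y" "t \<in> tdists Y" for s t
  proof -
    have "tle Y (g (?g s)) (g (?g t)) \<longleftrightarrow> tle X (?g s) (?g t)"
      using e gin[OF that(1)] gin[OF that(2)] unfolding dc_emb_def by blast
    then show ?thesis using gg that by simp
  qed
  have z: "?g (tzero Y) = tzero X"
  proof -
    have "g (tzero X) = tzero Y" using e unfolding dc_emb_def by blast
    then show ?thesis using t_zero[OF T] bg unfolding bij_betw_def by (metis inv_into_f_f)
  qed
  have d: "tdist X (?f y) (?f y') = ?g (tdist Y y y')" if "y \<in> tpts Y" "y' \<in> tpts Y" for y y'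
  proof -
    have "tdist Y y y' = g (tdist X (?f y) (?f y'))"
      using e fin[OF that(1)] fin[OF that(2)] ff[OF that(1)] ff[OF that(2)] unfolding dc_emb_def by metis
    moreover have "tdist X (?f y) (?f y') \<in> tdists X" using t_dist[OF T fin[OF that(1)] fin[OF that(2)]] .
    ultimately show ?thesis using bg unfolding bij_betw_def by (simp add: inv_into_f_f)
  qed
  have "dc_emb Y X ?f ?g" unfolding dc_emb_def
    using bf' bg' ord z d unfolding bij_betw_def by blast
  then show ?thesis using bf' bg' unfolding dc_iso_def by blast
qed


section \<open>A concrete rational ultrametric space\<close>

definition FS :: "(rat \<Rightarrow> nat) set" where
  "FS = {f. finite {q. f q \<noteq> 0} \<and> (\<forall>q. q \<le> 0 \<longrightarrow> f q = 0)}"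

definition fd :: "(rat \<Rightarrow> nat) \<Rightarrow> (rat \<Rightarrow> nat) \<Rightarrow> rat" where
  "fd f g = Max (insert 0 {q. f q \<noteq> g q})"

lemma FS_fin: "f \<in> FS \<Longrightarrow> g \<in> FS \<Longrightarrow> finite {q. f q \<noteq> g q}"
proof -
  assume a: "f \<in> FS" "g \<in> FS"
  have "{q. f q \<noteq> g q} \<subseteq> {q. f q \<noteq> 0} \<union> {q. g q \<noteq> 0}" by auto
  moreover have "finite ({q. f q \<noteq> 0} \<union> {q. g q \<noteq> 0})" using a unfolding FS_def by auto
  ultimately show ?thesis by (rule finite_subset)
qed

lemma FS_pos: "f \<in> FS \<Longrightarrow> g \<in> FS \<Longrightarrow> f q \<noteq> g q \<Longrightarrow> 0 < q"
  unfolding FS_def by (metis (mono_tags, lifting) mem_Collect_eq not_less)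

lemma fd_ge: "f \<in> FS \<Longrightarrow> g \<in> FS \<Longrightarrow> f q \<noteq> g q \<Longrightarrow> q \<le> fd f g"
  unfolding fd_def using FS_fin by (intro Max_ge) auto

lemma fd_nonneg: "f \<in> FS \<Longrightarrow> g \<in> FS \<Longrightarrow> 0 \<le> fd f g"
  unfolding fd_def using FS_fin by (intro Max_ge) auto

lemma fd_sym: "fd f g = fd g f"
  unfolding fd_def by (metis (mono_tags, lifting) Collect_cong)

lemma fd_agree: "f \<in> FS \<Longrightarrow> g \<in> FS \<Longrightarrow> fd f g < q \<Longrightarrow> f q = g q"
  using fd_ge by force

lemma fd_in: "f \<in> FS \<Longrightarrow> g \<in> FS \<Longrightarrow> f \<noteq> g \<Longrightarrow> f (fd f g) \<noteq> g (fd f g)"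
proof -
  assume a: "f \<in> FS" "g \<in> FS" "f \<noteq> g"
  then obtain q where q: "f q \<noteq> g q" by blast
  have "fd f g \<in> insert 0 {q. f q \<noteq> g q}" unfolding fd_def using FS_fin[OF a(1,2)] by (intro Max_in) auto
  moreover have "fd f g \<noteq> 0" using fd_ge[OF a(1,2) q] FS_pos[OF a(1,2) q] by auto
  ultimately show ?thesis by auto
qed

lemma fd_zero: "f \<in> FS \<Longrightarrow> g \<in> FS \<Longrightarrow> fd f g = 0 \<longleftrightarrow> f = g"
proof
  assume a: "f \<in> FS" "g \<in> FS" "fd f g = 0"
  show "f = g"
  proof (rule ccontr)
    assume "f \<noteq> g"
    then obtain q where q: "f q \<noteq> g q" by blast
    then show False using fd_ge[OF a(1,2) q] FS_pos[OF a(1,2) q] a(3) by auto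
  qed
next
  assume "f = g" then show "fd f g = 0" unfolding fd_def by simp
qed

lemma fd_char: "f \<in> FS \<Longrightarrow> g \<in> FS \<Longrightarrow> f m \<noteq> g m \<Longrightarrow> (\<And>q. m < q \<Longrightarrow> f q = g q) \<Longrightarrow> fd f g = m"
proof -
  assume a: "f \<in> FS" "g \<in> FS" "f m \<noteq> g m" "\<And>q. m < q \<Longrightarrow> f q = g q"
  have "0 < m" using FS_pos[OF a(1,2,3)] .
  then show ?thesis unfolding fd_def using FS_fin[OF a(1,2)] a(3,4)
    by (intro Max_eqI) (auto simp: not_less[symmetric])
qed

lemma fd_ultra: "f \<in> FS \<Longrightarrow> g \<in> FS \<Longrightarrow> h \<in> FS \<Longrightarrow> fd f h \<le> max (fd f g) (fd g h)"
proof -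
  assume a: "f \<in> FS" "g \<in> FS" "h \<in> FS"
  have "q \<le> max (fd f g) (fd g h)" if "q \<in> insert 0 {q. f q \<noteq> h q}" for q
  proof (cases "q = 0")
    case True then show ?thesis using fd_nonneg[OF a(1,2)] by simp
  next
    case False
    then have "f q \<noteq> h q" using that by simp
    then have "f q \<noteq> g q \<or> g q \<noteq> h q" by auto
    then show ?thesis using fd_ge[OF a(1,2)] fd_ge[OF a(2,3)] by (metis le_max_iff_disj)
  qed
  then show ?thesis unfolding fd_def[of f h] using FS_fin[OF a(1,3)] by simp
qed

lemma fs_ext:
  assumes fin: "finite S" and sub: "S \<subseteq> FS" and rpos: "\<And>x. x \<in> S \<Longrightarrow> 0 < r x"
    and c1: "\<And>x y. x \<in> S \<Longrightarrow> y \<in> S \<Longrightarrow> r x \<le> max (r y) (fd x y)"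
    and c2: "\<And>x y. x \<in> S \<Longrightarrow> y \<in> S \<Longrightarrow> fd x y \<le> max (r x) (r y)"
  shows "\<exists>p\<in>FS. \<forall>x\<in>S. fd p x = r x"
proof (cases "S = {}")
  case True
  have "(\<lambda>q. 0) \<in> FS" unfolding FS_def by simp
  then show ?thesis using True by blast
next
  case False
  define m where "m = Min (r ` S)"
  have "m \<in> r ` S" unfolding m_def using fin False by (intro Min_in) auto
  then obtain x0 where x0: "x0 \<in> S" "r x0 = m" by auto
  have mle: "m \<le> r x" if "x \<in> S" for x unfolding m_def using fin that by (intro Min_le) auto
  have mpos: "0 < m" using rpos x0 by auto
  define N where "N = Suc (Max ((\<lambda>x. x m) ` S))"
  have Nne: "N \<noteq> x m" if "x \<in> S" for x
  proof -
    have "x m \<le> Max ((\<lambda>x. x m) ` S)" using fin that by (intro Max_ge) auto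
    then show ?thesis unfolding N_def by simp
  qed
  define p where "p = (\<lambda>q. if m < q then x0 q else if q = m then N else 0)"
  have x0F: "x0 \<in> FS" using x0 sub by blast
  have pF: "p \<in> FS"
  proof -
    have "{q. p q \<noteq> 0} \<subseteq> insert m {q. x0 q \<noteq> 0}" unfolding p_def by auto
    moreover have "finite {q. x0 q \<noteq> 0}" using x0F unfolding FS_def by blast
    ultimately have "finite {q. p q \<noteq> 0}" by (meson finite_insert finite_subset)
    moreover have "p q = 0" if "q \<le> 0" for q using that mpos unfolding p_def by auto
    ultimately show ?thesis unfolding FS_def by blast
  qed
  have "fd p x = r x" if xS: "x \<in> S" for x
  proof -
    have xF: "x \<in> FS" using xS sub by blast
    show ?thesis
    proof (cases "m < fd x0 x")
      case True
      define \<delta> where "\<delta> = fd x0 x"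
      have "x0 \<noteq> x" using True mpos fd_zero[OF x0F xF] by auto
      then have ne: "x0 \<delta> \<noteq> x \<delta>" using fd_in[OF x0F xF] unfolding \<delta>_def by blast
      have "fd p x = \<delta>"
      proof (rule fd_char[OF pF xF])
        show "p \<delta> \<noteq> x \<delta>" using ne True unfolding p_def \<delta>_def by simp
        fix q assume "\<delta> < q"
        then show "p q = x q" using fd_agree[OF x0F xF, of q] True unfolding p_def \<delta>_def by simp
      qed
      moreover have "r x = \<delta>"
      proof -
        have "\<delta> \<le> max (r x0) (r x)" using c2[OF x0(1) xS] unfolding \<delta>_def .
        then have "\<delta> \<le> r x" using True x0(2) unfolding \<delta>_def by (simp add: le_max_iff_disj)
        moreover have "r x \<le> max (r x0) (fd x x0)" using c1[OF xS x0(1)] .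
        then have "r x \<le> \<delta>" using True x0(2) fd_sym[of x x0] unfolding \<delta>_def by (simp add: le_max_iff_disj)
        ultimately show ?thesis by simp
      qed
      ultimately show ?thesis by simp
    next
      case False
      have "fd p x = m"
      proof (rule fd_char[OF pF xF])
        show "p m \<noteq> x m" using Nne[OF xS] unfolding p_def by simp
        fix q assume "m < q"
        then show "p q = x q" using fd_agree[OF x0F xF, of q] False unfolding p_def by simp
      qed
      moreover have "r x = m"
      proof -
        have "r x \<le> max (r x0) (fd x x0)" using c1[OF xS x0(1)] .
        then have "r x \<le> m" using False x0(2) fd_sym[of x x0] by (simp add: le_max_iff_disj)
        then show ?thesis using mle[OF xS] by simp
      qed
      ultimately show ?thesis by simp
    qed
  qed
  then show ?thesis using pF by blast
qed

lemma FS_countable: "countable FS"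
proof -
  let ?g = "\<lambda>f::rat \<Rightarrow> nat. (\<lambda>q. (q, f q)) ` {q. f q \<noteq> 0}"
  have "?g ` FS \<subseteq> Collect finite" unfolding FS_def by auto
  then have "countable (?g ` FS)" using countable_Collect_finite countable_subset by blast
  moreover have "inj_on ?g FS"
  proof (rule inj_onI)
    fix f g assume a: "f \<in> FS" "g \<in> FS" "?g f = ?g g"
    show "f = g"
    proof
      fix q
      show "f q = g q"
      proof (cases "f q = 0")
        case True
        show ?thesis
        proof (rule ccontr)
          assume "f q \<noteq> g q"
          then have "(q, g q) \<in> ?g g" using True by auto
          then have "(q, g q) \<in> ?g f" using a(3) by simp
          then show False using True \<open>f q \<noteq> g q\<close> by auto
        qed
      next
        case False
        then have "(q, f q) \<in> ?g f" by auto
        then have "(q, f q) \<in> ?g g" using a(3) by simp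
        then show ?thesis by auto
      qed
    qed
  qed
  ultimately show ?thesis by (rule countable_image_inj_on)
qed

lemma FS_infinite: "infinite FS"
proof
  assume fin: "finite FS"
  let ?h = "\<lambda>n::nat. (\<lambda>q::rat. if q = 1 then n else 0)"
  have "range ?h \<subseteq> FS" unfolding FS_def by auto
  moreover have "inj ?h"
  proof (rule injI)
    fix a b assume h: "?h a = ?h b"
    from fun_cong[OF h, of 1] show "a = b" by simp
  qed
  ultimately show False using fin by (meson finite_subset infinite_UNIV_nat finite_imageD)
qed

definition pt :: "nat \<Rightarrow> (rat \<Rightarrow> nat)" where "pt = from_nat_into FS"

lemma pt_bij: "bij_betw pt UNIV FS"
  unfolding pt_def using bij_betw_from_nat_into[OF FS_countable FS_infinite] .

lemma pt_in: "pt n \<in> FS" using pt_bij unfolding bij_betw_def by blast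
lemma pt_inj: "pt m = pt n \<longleftrightarrow> m = n" using pt_bij unfolding bij_betw_def inj_on_def by blast
lemma pt_surj: "f \<in> FS \<Longrightarrow> \<exists>n. pt n = f"
proof -
  assume "f \<in> FS"
  then have "f \<in> range pt" using pt_bij unfolding bij_betw_def by simp
  then show ?thesis by blast
qed

definition d0 :: "nat \<Rightarrow> nat \<Rightarrow> rat" where "d0 m n = fd (pt m) (pt n)"

lemma d0_ru: "rat_ultrametric UNIV d0"
proof -
  have 1: "0 \<le> d0 x y \<and> d0 x y = d0 y x \<and> (d0 x y = 0 \<longleftrightarrow> x = y)" for x y
    unfolding d0_def using fd_nonneg[OF pt_in pt_in] fd_sym fd_zero[OF pt_in pt_in] pt_inj by metis
  have 2: "d0 x z \<le> max (d0 x y) (d0 y z)" for x y z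
    unfolding d0_def by (rule fd_ultra[OF pt_in pt_in pt_in])
  show ?thesis unfolding rat_ultrametric_def using 1 2 by blast
qed

lemma d0_ext:
  assumes fin: "finite S" and rpos: "\<And>x. x \<in> S \<Longrightarrow> 0 < r x"
    and c1: "\<And>x y. x \<in> S \<Longrightarrow> y \<in> S \<Longrightarrow> r x \<le> max (r y) (d0 x y)"
    and c2: "\<And>x y. x \<in> S \<Longrightarrow> y \<in> S \<Longrightarrow> d0 x y \<le> max (r x) (r y)"
  shows "\<exists>p. \<forall>x\<in>S. d0 p x = r x"
proof -
  define r' where "r' f = r (inv pt f)" for f
  have r'r: "r' (pt x) = r x" for x unfolding r'_def using pt_inj by (metis injI inv_f_f)
  have "\<exists>p\<in>FS. \<forall>y\<in>pt ` S. fd p y = r' y"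
  proof (rule fs_ext)
    show "finite (pt ` S)" using fin by simp
    show "pt ` S \<subseteq> FS" using pt_in by blast
  qed (auto simp: r'r rpos c1[unfolded d0_def] c2[unfolded d0_def])
  then obtain f where f: "f \<in> FS" "\<forall>y\<in>pt ` S. fd f y = r' y" by blast
  obtain p where "pt p = f" using pt_surj[OF f(1)] by blast
  then show ?thesis using f(2) r'r unfolding d0_def by auto
qed


lemma EPI:
  assumes "is_tsu X"
    and "\<forall>t\<in>tdists X. \<exists>u\<in>tdists X. tle X t u \<and> t \<noteq> u"
    and "\<forall>s\<in>tdists X. \<forall>t\<in>tdists X. tle X s t \<and> s \<noteq> t \<longrightarrow>
        (\<exists>u\<in>tdists X. tle X s u \<and> s \<noteq> u \<and> tle X u t \<and> u \<noteq> t)"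
    and "\<forall>S r. finite S \<and> S \<subseteq> tpts X \<and> (\<forall>x\<in>S. r x \<in> tdists X \<and> r x \<noteq> tzero X) \<and>
        (\<forall>x\<in>S. \<forall>y\<in>S. ultra X (r x) (r y) (tdist X x y)) \<longrightarrow>
        (\<exists>p\<in>tpts X. \<forall>x\<in>S. tdist X p x = r x)"
  shows "EP X"
  using assms unfolding EP_def apply - apply (intro conjI) apply assumption+ done

lemma rat_tsu_sel[simp]: "tpts (rat_tsu P d) = P" "tdists (rat_tsu P d) = {q. 0 \<le> q}"
  "tle (rat_tsu P d) = (\<le>)" "tzero (rat_tsu P d) = 0" "tdist (rat_tsu P d) = d"
  unfolding rat_tsu_def by simp_all

lemma ru_tsu:
  assumes ru: "rat_ultrametric P d"
  shows "is_tsu (rat_tsu P d)"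
proof -
  have a: "\<forall>x\<in>P. \<forall>y\<in>P. 0 \<le> d x y \<and> d x y = d y x \<and> (d x y = 0 \<longleftrightarrow> x = y)"
    and b: "\<forall>x\<in>P. \<forall>y\<in>P. \<forall>z\<in>P. d x z \<le> max (d x y) (d y z)"
    using ru unfolding rat_ultrametric_def by blast+
  show ?thesis
  proof (rule is_tsuI, simp_all only: rat_tsu_sel)
    show "\<forall>x\<in>P. \<forall>y\<in>P. \<forall>z\<in>P. d x z \<le> d x y \<or> d x z \<le> d y z"
      using b by (metis le_max_iff_disj)
  qed (use a in auto)
qed

lemma EP_rat:
  assumes ru: "rat_ultrametric P d"
    and ext: "\<And>S r. finite S \<Longrightarrow> S \<subseteq> P \<Longrightarrow> (\<forall>x\<in>S. 0 < r x) \<Longrightarrow>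
       (\<forall>x\<in>S. \<forall>y\<in>S. r x \<le> max (r y) (d x y) \<and> d x y \<le> max (r x) (r y)) \<Longrightarrow> \<exists>p\<in>P. \<forall>x\<in>S. d p x = r x"
  shows "EP (rat_tsu P d)"
proof (rule EPI[OF ru_tsu[OF ru]], simp_all only: rat_tsu_sel)
  show "\<forall>t\<in>{q::rat. 0 \<le> q}. \<exists>u\<in>{q::rat. 0 \<le> q}. t \<le> u \<and> t \<noteq> u"
  proof
    fix t :: rat assume "t \<in> {q. 0 \<le> q}"
    then show "\<exists>u\<in>{q::rat. 0 \<le> q}. t \<le> u \<and> t \<noteq> u" by (intro bexI[of _ "t+1"]) auto
  qed
  show "\<forall>s\<in>{q::rat. 0 \<le> q}. \<forall>t\<in>{q::rat. 0 \<le> q}. s \<le> t \<and> s \<noteq> t \<longrightarrow>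
      (\<exists>u\<in>{q::rat. 0 \<le> q}. s \<le> u \<and> s \<noteq> u \<and> u \<le> t \<and> u \<noteq> t)"
  proof (intro ballI impI)
    fix s t :: rat assume "s \<in> {q. 0 \<le> q}" "t \<in> {q. 0 \<le> q}" "s \<le> t \<and> s \<noteq> t"
    then show "\<exists>u\<in>{q. 0 \<le> q}. s \<le> u \<and> s \<noteq> u \<and> u \<le> t \<and> u \<noteq> t"
      by (intro bexI[of _ "(s+t)/2"]) auto
  qed
  show "\<forall>S r. finite S \<and> S \<subseteq> P \<and> (\<forall>x\<in>S. r x \<in> {q. 0 \<le> q} \<and> r x \<noteq> 0) \<and>
      (\<forall>x\<in>S. \<forall>y\<in>S. ultra (rat_tsu P d) (r x) (r y) (d x y)) \<longrightarrow> (\<exists>p\<in>P. \<forall>x\<in>S. d p x = r x)"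
  proof (intro allI impI)
    fix S r assume h: "finite S \<and> S \<subseteq> P \<and> (\<forall>x\<in>S. r x \<in> {q. 0 \<le> q} \<and> r x \<noteq> 0) \<and>
      (\<forall>x\<in>S. \<forall>y\<in>S. ultra (rat_tsu P d) (r x) (r y) (d x y))"
    have pos: "\<forall>x\<in>S. 0 < r x"
    proof
      fix x assume "x \<in> S"
      then have "r x \<in> {q. 0 \<le> q}" "r x \<noteq> 0" using h by blast+
      then show "0 < r x" by simp
    qed
    have u: "ultra (rat_tsu P d) (r x) (r y) (d x y)" if "x \<in> S" "y \<in> S" for x y using h that by blast
    have c: "r x \<le> max (r y) (d x y) \<and> d x y \<le> max (r x) (r y)" if "x \<in> S" "y \<in> S" for x y
      using u[OF that] unfolding ultra_def rat_tsu_sel by (simp add: le_max_iff_disj)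
    have f: "finite S" and sP: "S \<subseteq> P" using h by blast+
    show "\<exists>p\<in>P. \<forall>x\<in>S. d p x = r x" by (rule ext[OF f sP pos]) (use c in blast)
  qed
qed

definition RQ :: "(nat, rat) tsu" where "RQ = rat_tsu UNIV d0"

lemma EP_RQ: "EP RQ"
  unfolding RQ_def
proof (rule EP_rat[OF d0_ru])
  fix S and r :: "nat \<Rightarrow> rat"
  assume "finite S" "S \<subseteq> UNIV" "\<forall>x\<in>S. 0 < r x" "\<forall>x\<in>S. \<forall>y\<in>S. r x \<le> max (r y) (d0 x y) \<and> d0 x y \<le> max (r x) (r y)"
  then show "\<exists>p\<in>UNIV. \<forall>x\<in>S. d0 p x = r x" using d0_ext[of S r] by blast
qed

section \<open>The nat-coded model M\<close>

definition QP :: "rat set" where "QP = {q. 0 \<le> q}"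
definition qd :: "nat \<Rightarrow> rat" where "qd = from_nat_into QP"
definition qe :: "rat \<Rightarrow> nat" where "qe = to_nat_on QP"

lemma QP_c: "countable QP" by (rule countableI'[of id]) simp
lemma QP_inf: "infinite QP"
proof
  assume "finite QP"
  moreover have "range (of_nat :: nat \<Rightarrow> rat) \<subseteq> QP" unfolding QP_def by auto
  moreover have "inj (of_nat :: nat \<Rightarrow> rat)" by (simp add: inj_on_def)
  ultimately show False by (meson finite_subset infinite_UNIV_nat finite_imageD)
qed

lemma qd_in: "0 \<le> qd n" using bij_betw_from_nat_into[OF QP_c QP_inf] unfolding qd_def bij_betw_def QP_def by blast
lemma qe_qd[simp]: "qe (qd n) = n" unfolding qe_def qd_def using QP_c QP_inf by simp
lemma qd_qe[simp]: "0 \<le> q \<Longrightarrow> qd (qe q) = q" unfolding qe_def qd_def QP_def using QP_c[unfolded QP_def] by simp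
lemma qd_inj: "qd a = qd b \<longleftrightarrow> a = b" by (metis qe_qd)

definition M :: "(nat, nat) tsu" where
  "M = \<lparr>tpts = UNIV, tdists = UNIV, tle = (\<lambda>a b. qd a \<le> qd b), tzero = qe 0, tdist = (\<lambda>x y. qe (d0 x y))\<rparr>"

lemma M_sel[simp]: "tpts M = UNIV" "tdists M = UNIV" "tle M = (\<lambda>a b. qd a \<le> qd b)" "tzero M = qe 0"
  "tdist M = (\<lambda>x y. qe (d0 x y))"
  unfolding M_def by simp_all

lemma d0_ge: "0 \<le> d0 x y" using d0_ru unfolding rat_ultrametric_def by blast
lemma d0_sym: "d0 x y = d0 y x" using d0_ru unfolding rat_ultrametric_def by blast
lemma d0_0: "d0 x y = 0 \<longleftrightarrow> x = y" using d0_ru unfolding rat_ultrametric_def by blast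
lemma d0_tri: "d0 x z \<le> max (d0 x y) (d0 y z)" using d0_ru unfolding rat_ultrametric_def by blast

lemma M_tsu: "is_tsu M"
proof (rule is_tsuI, simp_all only: M_sel)
  show "\<forall>x\<in>UNIV. \<forall>y\<in>UNIV. (qe (d0 x y) = qe 0) = (x = y)"
  proof (intro ballI)
    fix x y
    have "qe (d0 x y) = qe 0 \<longleftrightarrow> d0 x y = 0"
    proof
      assume "qe (d0 x y) = qe 0"
      then have "qd (qe (d0 x y)) = qd (qe 0)" by simp
      then show "d0 x y = 0" using d0_ge[of x y] by simp
    qed simp
    then show "(qe (d0 x y) = qe 0) = (x = y)" using d0_0 by simp
  qed
  show "\<forall>x\<in>UNIV. \<forall>y\<in>UNIV. \<forall>z\<in>UNIV. qd (qe (d0 x z)) \<le> qd (qe (d0 x y)) \<or> qd (qe (d0 x z)) \<le> qd (qe (d0 y z))"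
    using d0_tri d0_ge by (simp add: le_max_iff_disj)
  show "\<forall>s\<in>UNIV. \<forall>t\<in>UNIV. qd s \<le> qd t \<and> qd t \<le> qd s \<longrightarrow> s = t"
  proof (intro ballI impI)
    fix s t assume "qd s \<le> qd t \<and> qd t \<le> qd s"
    then have "qd s = qd t" by simp
    then show "s = t" using qd_inj by blast
  qed
qed (auto simp: qd_in d0_sym)

lemma EP_M: "EP M"
proof (rule EPI[OF M_tsu], simp_all only: M_sel)
  show "\<forall>t\<in>UNIV. \<exists>u\<in>UNIV. qd t \<le> qd u \<and> t \<noteq> u"
  proof
    fix t
    have qu: "qd (qe (qd t + 1)) = qd t + 1" using qd_in[of t] by simp
    then have "qd t \<le> qd (qe (qd t + 1))" "t \<noteq> qe (qd t + 1)" by auto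
    then show "\<exists>u\<in>UNIV. qd t \<le> qd u \<and> t \<noteq> u" by blast
  qed
  show "\<forall>s\<in>UNIV. \<forall>t\<in>UNIV. qd s \<le> qd t \<and> s \<noteq> t \<longrightarrow> (\<exists>u\<in>UNIV. qd s \<le> qd u \<and> s \<noteq> u \<and> qd u \<le> qd t \<and> u \<noteq> t)"
  proof (intro ballI impI)
    fix s t assume h: "qd s \<le> qd t \<and> s \<noteq> t"
    then have lt: "qd s < qd t" using qd_inj by (metis order_le_less)
    define u where "u = qe ((qd s + qd t) / 2)"
    have qu: "qd u = (qd s + qd t) / 2" unfolding u_def using qd_in[of s] qd_in[of t] by simp
    have "qd s < qd u" "qd u < qd t" using lt qu by auto
    then show "\<exists>u\<in>UNIV. qd s \<le> qd u \<and> s \<noteq> u \<and> qd u \<le> qd t \<and> u \<noteq> t" by (intro bexI[of _ u]) auto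
  qed
  show "\<forall>S r. finite S \<and> S \<subseteq> UNIV \<and> (\<forall>x\<in>S. r x \<in> UNIV \<and> r x \<noteq> qe 0) \<and>
      (\<forall>x\<in>S. \<forall>y\<in>S. ultra M (r x) (r y) (qe (d0 x y))) \<longrightarrow> (\<exists>p\<in>UNIV. \<forall>x\<in>S. qe (d0 p x) = r x)"
  proof (intro allI impI)
    fix S r assume h: "finite S \<and> S \<subseteq> UNIV \<and> (\<forall>x\<in>S. r x \<in> UNIV \<and> r x \<noteq> qe 0) \<and>
      (\<forall>x\<in>S. \<forall>y\<in>S. ultra M (r x) (r y) (qe (d0 x y)))"
    define r' where "r' x = qd (r x)" for x
    have pos: "0 < r' x" if "x \<in> S" for x
    proof -
      have "r x \<noteq> qe 0" using h that by blast
      then have "qd (r x) \<noteq> 0" by (metis qe_qd)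
      then show ?thesis unfolding r'_def using qd_in[of "r x"] by simp
    qed
    have c: "r' x \<le> max (r' y) (d0 x y) \<and> d0 x y \<le> max (r' x) (r' y)" if "x \<in> S" "y \<in> S" for x y
    proof -
      have "ultra M (r x) (r y) (qe (d0 x y))" using h that by blast
      moreover have "qd (qe (d0 x y)) = d0 x y" using d0_ge[of x y] by simp
      ultimately show ?thesis unfolding ultra_def M_sel r'_def by (simp add: le_max_iff_disj)
    qed
    have fin: "finite S" using h by blast
    obtain p where p: "\<forall>x\<in>S. d0 p x = r' x" using d0_ext[of S r', OF fin pos] c by blast
    then show "\<exists>p\<in>UNIV. \<forall>x\<in>S. qe (d0 p x) = r x" unfolding r'_def by (intro bexI[of _ p]) auto
  qed
qed


lemma gmap_rat: "gmap (rat_tsu A dA) (rat_tsu P d) id"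
  unfolding gmap_def oemb_def by simp

lemma UQ_d0: "is_UQ (UNIV :: nat set) d0"
proof -
  have univ: "\<exists>h. h ` A \<subseteq> UNIV \<and> rat_isometry_on A dA d0 h" if fA: "finite A" and ru: "rat_ultrametric A dA"
    for A :: "nat set" and dA
  proof -
    let ?X = "rat_tsu A dA"
    have TX: "is_tsu ?X" using ru_tsu[OF ru] .
    have gm: "gmap ?X RQ id" unfolding RQ_def by (rule gmap_rat)
    have ok: "okP ?X RQ id {}" unfolding okP_def by simp
    obtain R where R: "okP ?X RQ id R" "A \<subseteq> Domain R"
      using okP_iter[OF TX EP_RQ gm ok fA] by auto
    have TY: "is_tsu RQ" using EP_tsu[OF EP_RQ] .
    define h where "h = rfun R"
    have hs: "h x = y" if "(x,y) \<in> R" for x y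
      unfolding h_def using rfun_eq[OF that] okP_fun[OF TX TY gm R(1) that] by blast
    have dom: "(x, h x) \<in> R" if hx: "x \<in> A" for x
    proof -
      obtain y where "(x,y) \<in> R" using R(2) hx by blast
      then show ?thesis using hs by simp
    qed
    have dist: "d0 (h x) (h y) = dA x y" if "x \<in> A" "y \<in> A" for x y
      using okP_d[OF R(1) dom[OF that(1)] dom[OF that(2)]] unfolding RQ_def by simp
    have "inj_on h A"
    proof (rule inj_onI)
      fix x y assume a: "x \<in> A" "y \<in> A" "h x = h y"
      have "d0 (h x) (h y) = 0" using a(3) d0_0 by simp
      then have "dA x y = 0" using dist[OF a(1,2)] by simp
      then show "x = y" using ru a unfolding rat_ultrametric_def by blast
    qed
    then show ?thesis using dist unfolding rat_isometry_on_def by blast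
  qed
  have hom: "\<exists>H. bij_betw H UNIV UNIV \<and> rat_isometry_on UNIV d0 d0 H \<and> (\<forall>x\<in>S. H x = h x)"
    if "finite S" "rat_isometry_on S d0 d0 h" for S :: "nat set" and h
  proof -
    let ?R0 = "(\<lambda>x. (x, h x)) ` S"
    have ok: "okP RQ RQ id ?R0" using that unfolding okP_def RQ_def rat_isometry_on_def by auto
    obtain F where F: "bij_betw F UNIV UNIV" "\<forall>x\<in>UNIV. \<forall>x'\<in>UNIV. d0 (F x) (F x') = d0 x x'"
      "\<forall>(x,y)\<in>?R0. F x = y"
      using bf_isometry[OF EP_RQ _ ok] unfolding RQ_def by auto
    have "rat_isometry_on UNIV d0 d0 F" using F(1,2) unfolding rat_isometry_on_def bij_betw_def by blast
    moreover have "\<forall>x\<in>S. F x = h x" using F(3) by auto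
    ultimately show ?thesis using F(1) by blast
  qed
  have 1: "\<forall>(A :: nat set) dA. finite A \<and> rat_ultrametric A dA \<longrightarrow>
        (\<exists>h. h ` A \<subseteq> UNIV \<and> rat_isometry_on A dA d0 h)" using univ by blast
  have 2: "\<forall>S T h. finite S \<and> finite T \<and> S \<subseteq> UNIV \<and> T \<subseteq> UNIV \<and> bij_betw h S T \<and>
        rat_isometry_on S d0 d0 h \<longrightarrow>
        (\<exists>H. bij_betw H UNIV UNIV \<and> rat_isometry_on UNIV d0 d0 H \<and> (\<forall>x\<in>S. H x = h x))"
  proof (intro allI impI)
    fix S T :: "nat set" and h assume "finite S \<and> finite T \<and> S \<subseteq> UNIV \<and> T \<subseteq> UNIV \<and> bij_betw h S T \<and>
        rat_isometry_on S d0 d0 h"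
    then show "\<exists>H. bij_betw H UNIV UNIV \<and> rat_isometry_on UNIV d0 d0 H \<and> (\<forall>x\<in>S. H x = h x)"
      using hom[of S h] by blast
  qed
  show ?thesis unfolding is_UQ_def using d0_ru 1 2 by blast
qed

lemma ext_space:
  fixes S :: "'a set" and d :: "'a \<Rightarrow> 'a \<Rightarrow> rat" and n :: nat
  assumes ru: "rat_ultrametric P d" and SP: "S \<subseteq> P" and fin: "finite S"
    and pos: "\<forall>x\<in>S. 0 < r x"
    and c: "\<forall>x\<in>S. \<forall>y\<in>S. r x \<le> max (r y) (d x y) \<and> d x y \<le> max (r x) (r y)"
    and e: "bij_betw e {..<n} S"
  defines "dA \<equiv> \<lambda>i j. if i < n then (if j < n then d (e i) (e j) else r (e i)) else (if j < n then r (e j) else 0)"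
  shows "rat_ultrametric {..n} dA"
proof -
  have eS: "e i \<in> S" if "i < n" for i using e that unfolding bij_betw_def by auto
  have einj: "e i = e j \<longleftrightarrow> i = j" if "i < n" "j < n" for i j
    using e that unfolding bij_betw_def inj_on_def by auto
  have dP: "0 \<le> d x y \<and> d x y = d y x \<and> (d x y = 0 \<longleftrightarrow> x = y)" if "x \<in> S" "y \<in> S" for x y
    using ru that SP unfolding rat_ultrametric_def by blast
  have dU: "d x z \<le> max (d x y) (d y z)" if "x \<in> S" "y \<in> S" "z \<in> S" for x y z
    using ru that SP unfolding rat_ultrametric_def by blast
  have A1: "0 \<le> dA i j \<and> dA i j = dA j i \<and> (dA i j = 0 \<longleftrightarrow> i = j)" if "i \<le> n" "j \<le> n" for i j
  proof (cases "i < n")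
    case True
    show ?thesis
    proof (cases "j < n")
      case True
      then show ?thesis using \<open>i < n\<close> dP[OF eS eS] einj unfolding dA_def by auto
    next
      case False
      then show ?thesis using \<open>i < n\<close> pos eS[OF \<open>i < n\<close>] unfolding dA_def by force
    qed
  next
    case False
    show ?thesis
    proof (cases "j < n")
      case True
      then show ?thesis using False pos eS[OF \<open>j < n\<close>] unfolding dA_def by force
    next
      case False
      have "i = n" using \<open>\<not> i < n\<close> that by linarith
      moreover have "j = n" using False that by linarith
      ultimately show ?thesis unfolding dA_def by simp
    qed
  qed
  have A2: "dA i k \<le> max (dA i j) (dA j k)" if "i \<le> n" "j \<le> n" "k \<le> n" for i j k
  proof -
    have ri: "0 < r (e a)" if "a < n" for a using pos eS[OF that] by blast
    have dpos: "0 \<le> d (e a) (e b)" if "a < n" "b < n" for a b using dP[OF eS[OF that(1)] eS[OF that(2)]] by blast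
    have cc: "r (e a) \<le> max (r (e b)) (d (e a) (e b)) \<and> d (e a) (e b) \<le> max (r (e a)) (r (e b))" if "a < n" "b < n" for a b
      using c eS[OF that(1)] eS[OF that(2)] by blast
    have sy: "d (e a) (e b) = d (e b) (e a)" if "a < n" "b < n" for a b using dP[OF eS[OF that(1)] eS[OF that(2)]] by blast
    show ?thesis
    proof (cases "i < n")
      case i: True
      show ?thesis
      proof (cases "j < n")
        case j: True
        show ?thesis
        proof (cases "k < n")
          case k: True
          then show ?thesis using i j dU[OF eS[OF i] eS[OF j] eS[OF k]] unfolding dA_def by simp
        next
          case k: False
          then show ?thesis using i j cc[OF i j] unfolding dA_def by (auto simp: max.commute)
        qed
      next
        case j: False
        show ?thesis
        proof (cases "k < n")
          case k: True
          then show ?thesis using i j cc[OF i k] unfolding dA_def by simp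
        next
          case k: False
          then show ?thesis using i j unfolding dA_def by simp
        qed
      qed
    next
      case i: False
      show ?thesis
      proof (cases "j < n")
        case j: True
        show ?thesis
        proof (cases "k < n")
          case k: True
          then show ?thesis using i j cc[OF k j] sy[OF k j] unfolding dA_def by simp
        next
          case k: False
          then show ?thesis using i j ri[OF j] unfolding dA_def by simp
        qed
      next
        case j: False
        show ?thesis
        proof (cases "k < n")
          case k: True
          then show ?thesis using i j ri[OF k] unfolding dA_def by simp
        next
          case k: False
          then show ?thesis using i j unfolding dA_def by simp
        qed
      qed
    qed
  qed
  have "\<forall>x\<in>{..n}. \<forall>y\<in>{..n}. 0 \<le> dA x y \<and> dA x y = dA y x \<and> (dA x y = 0 \<longleftrightarrow> x = y)"
    using A1 by simp
  moreover have "\<forall>x\<in>{..n}. \<forall>y\<in>{..n}. \<forall>z\<in>{..n}. dA x z \<le> max (dA x y) (dA y z)"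
    using A2 by simp
  ultimately show ?thesis unfolding rat_ultrametric_def by blast
qed

lemma EP_UQ:
  fixes P :: "'k set" and d
  assumes U: "is_UQ P d"
  shows "EP (rat_tsu P d)"
proof -
  have ru: "rat_ultrametric P d" using U unfolding is_UQ_def by blast
  have univ: "\<forall>(A :: nat set) dA. finite A \<and> rat_ultrametric A dA \<longrightarrow>
        (\<exists>h. h ` A \<subseteq> P \<and> rat_isometry_on A dA d h)" using U unfolding is_UQ_def by blast
  have hom: "\<forall>S T h. finite S \<and> finite T \<and> S \<subseteq> P \<and> T \<subseteq> P \<and> bij_betw h S T \<and>
        rat_isometry_on S d d h \<longrightarrow>
        (\<exists>H. bij_betw H P P \<and> rat_isometry_on P d d H \<and> (\<forall>x\<in>S. H x = h x))"
    using U unfolding is_UQ_def by blast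
  show ?thesis
  proof (rule EP_rat[OF ru])
    fix S r assume fin: "finite S" and SP: "S \<subseteq> P" and pos: "\<forall>x\<in>S. 0 < r x"
      and c: "\<forall>x\<in>S. \<forall>y\<in>S. r x \<le> max (r y) (d x y) \<and> d x y \<le> max (r x) (r y)"
    define n where "n = card S"
    define e where "e = from_nat_into S"
    have e: "bij_betw e {..<n} S" unfolding e_def n_def using bij_betw_from_nat_into_finite[OF fin] .
    define dA where "dA = (\<lambda>i j. if i < n then (if j < n then d (e i) (e j) else r (e i)) else (if j < n then r (e j) else 0))"
    have ruA: "rat_ultrametric {..n} dA" unfolding dA_def by (rule ext_space[OF ru SP fin pos c e])
    have "finite {..n} \<and> rat_ultrametric {..n} dA" using ruA by simp
    then have "\<exists>h. h ` {..n} \<subseteq> P \<and> rat_isometry_on {..n} dA d h" by (rule univ[rule_format])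
    then obtain h where h: "h ` {..n} \<subseteq> P" "rat_isometry_on {..n} dA d h" by blast
    have hinj: "inj_on h {..n}" and hd: "\<forall>i\<in>{..n}. \<forall>j\<in>{..n}. d (h i) (h j) = dA i j"
      using h(2) unfolding rat_isometry_on_def by blast+
    define T where "T = h ` {..<n}"
    define k where "k y = e (inv_into {..<n} h y)" for y
    have hinj': "inj_on h {..<n}" using hinj by (rule inj_on_subset) auto
    have kh: "k (h i) = e i" if "i < n" for i unfolding k_def using hinj' that by simp
    have eS: "e i \<in> S" if "i < n" for i using e that unfolding bij_betw_def by auto
    have einj: "inj_on e {..<n}" using e unfolding bij_betw_def by blast
    have kimg: "k ` T = S"
    proof -
      have "k ` T = e ` {..<n}" unfolding T_def image_image using kh by simp
      then show ?thesis using e unfolding bij_betw_def by simp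
    qed
    have kinj: "inj_on k T"
    proof (rule inj_onI)
      fix y y' assume a: "y \<in> T" "y' \<in> T" "k y = k y'"
      then obtain i j where ij: "i < n" "j < n" "y = h i" "y' = h j" unfolding T_def by auto
      then have "e i = e j" using a(3) kh by simp
      then have "i = j" using einj ij(1,2) unfolding inj_on_def by blast
      then show "y = y'" using ij by simp
    qed
    have kbij: "bij_betw k T S" using kimg kinj unfolding bij_betw_def by blast
    have kiso: "rat_isometry_on T d d k"
    proof -
      have "d (k y) (k y') = d y y'" if hy: "y \<in> T" "y' \<in> T" for y y'
      proof -
        obtain i j where ij: "i < n" "j < n" "y = h i" "y' = h j" using hy unfolding T_def by auto
        have "d (k y) (k y') = d (e i) (e j)" using ij kh by simp
        also have "\<dots> = dA i j" unfolding dA_def using ij by simp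
        also have "\<dots> = d y y'" using hd ij by simp
        finally show ?thesis .
      qed
      then show ?thesis using kinj unfolding rat_isometry_on_def by blast
    qed
    have TP: "T \<subseteq> P" "finite T" unfolding T_def using h(1) by auto
    have "finite T \<and> finite S \<and> T \<subseteq> P \<and> S \<subseteq> P \<and> bij_betw k T S \<and> rat_isometry_on T d d k"
      using fin SP TP kbij kiso by blast
    then have "\<exists>H. bij_betw H P P \<and> rat_isometry_on P d d H \<and> (\<forall>x\<in>T. H x = k x)" by (rule hom[rule_format])
    then obtain H where H: "bij_betw H P P" "rat_isometry_on P d d H" "\<forall>x\<in>T. H x = k x" by blast
    have hn: "h n \<in> P" using h(1) by auto
    have pP: "H (h n) \<in> P" using H(1) hn unfolding bij_betw_def by blast
    have "d (H (h n)) x = r x" if hx: "x \<in> S" for x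
    proof -
      obtain j where j: "j < n" "x = e j" using hx e unfolding bij_betw_def by auto
      have hj: "h j \<in> T" "h j \<in> P" unfolding T_def using j h(1) by auto
      have "H (h j) = x" using H(3) hj kh j by simp
      then have "d (H (h n)) x = d (H (h n)) (H (h j))" by simp
      also have "\<dots> = d (h n) (h j)" using H(2) hn hj unfolding rat_isometry_on_def by blast
      also have "\<dots> = dA n j" using hd j by simp
      also have "\<dots> = r x" unfolding dA_def using j by simp
      finally show ?thesis .
    qed
    then show "\<exists>p\<in>P. \<forall>x\<in>S. d p x = r x" using pP by blast
  qed
qed


lemma dc_emb_ginj: "is_tsu X \<Longrightarrow> dc_emb X Y f g \<Longrightarrow> inj_on g (tdists X)"
proof -
  assume T: "is_tsu X" and e: "dc_emb X Y f g"
  show ?thesis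
  proof (rule inj_onI)
    fix s t assume a: "s \<in> tdists X" "t \<in> tdists X" "g s = g t"
    have "\<forall>s\<in>tdists X. \<forall>t\<in>tdists X. tle Y (g s) (g t) \<longleftrightarrow> tle X s t" using e unfolding dc_emb_def by blast
    then have "tle X s t" "tle X t s" using a t_refl[OF T] by metis+
    then show "s = t" using t_antisym[OF T a(1,2)] by blast
  qed
qed

lemma dc_emb_oemb: "dc_emb X Y f g \<Longrightarrow> oemb X Y g (tdists X)"
  unfolding dc_emb_def oemb_def by blast

lemma pdata_triv: "is_tsu X \<Longrightarrow> is_tsu Y \<Longrightarrow> pdata X Y {} {tzero X} f0 (\<lambda>_. tzero Y)"
proof -
  assume TX: "is_tsu X" and TY: "is_tsu Y"
  have "oemb X Y (\<lambda>_. tzero Y) {tzero X}"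
    unfolding oemb_def using t_zero[OF TY] t_refl[OF TY t_zero[OF TY]] t_refl[OF TX t_zero[OF TX]] by simp
  then show ?thesis unfolding pdata_def using t_zero[OF TX] by simp
qed

lemma pdata_emb:
  assumes TA: "is_tsu A" and fin: "finite (tpts A)" "finite (tdists A)"
    and ea: "dc_emb A C a a'" and ee: "dc_emb A N e e'"
  shows "pdata C N (a ` tpts A) (a' ` tdists A) (e \<circ> inv_into (tpts A) a) (e' \<circ> inv_into (tdists A) a')"
proof -
  have ia: "inv_into (tpts A) a (a x) = x" if "x \<in> tpts A" for x
    using ea that unfolding dc_emb_def by (simp add: inv_into_f_f)
  have ia': "inv_into (tdists A) a' (a' t) = t" if "t \<in> tdists A" for t
    using dc_emb_ginj[OF TA ea] that by (simp add: inv_into_f_f)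
  have ea1: "a ` tpts A \<subseteq> tpts C" "a' ` tdists A \<subseteq> tdists C" "a' (tzero A) = tzero C"
    "\<forall>s\<in>tdists A. \<forall>t\<in>tdists A. tle C (a' s) (a' t) \<longleftrightarrow> tle A s t"
    "\<forall>x\<in>tpts A. \<forall>x'\<in>tpts A. tdist C (a x) (a x') = a' (tdist A x x')"
    using ea unfolding dc_emb_def by blast+
  have ee1: "e ` tpts A \<subseteq> tpts N" "e' ` tdists A \<subseteq> tdists N" "e' (tzero A) = tzero N"
    "\<forall>s\<in>tdists A. \<forall>t\<in>tdists A. tle N (e' s) (e' t) \<longleftrightarrow> tle A s t"
    "\<forall>x\<in>tpts A. \<forall>x'\<in>tpts A. tdist N (e x) (e x') = e' (tdist A x x')"
    using ee unfolding dc_emb_def by blast+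
  have z: "tzero A \<in> tdists A" using t_zero[OF TA] .
  have 1: "tzero C \<in> a' ` tdists A" using ea1(3) z by (metis imageI)
  have 2: "(e' \<circ> inv_into (tdists A) a') (tzero C) = tzero N" using ea1(3) ia'[OF z] ee1(3) by (metis comp_apply)
  have 3: "oemb C N (e' \<circ> inv_into (tdists A) a') (a' ` tdists A)"
    unfolding oemb_def
  proof
    show "(e' \<circ> inv_into (tdists A) a') ` a' ` tdists A \<subseteq> tdists N" using ia' ee1(2) by auto
    show "\<forall>s\<in>a' ` tdists A. \<forall>t\<in>a' ` tdists A. tle N ((e' \<circ> inv_into (tdists A) a') s) ((e' \<circ> inv_into (tdists A) a') t) = tle C s t"
    proof (intro ballI)
      fix s t assume "s \<in> a' ` tdists A" "t \<in> a' ` tdists A"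
      then obtain s0 t0 where st: "s0 \<in> tdists A" "t0 \<in> tdists A" "s = a' s0" "t = a' t0" by blast
      then show "tle N ((e' \<circ> inv_into (tdists A) a') s) ((e' \<circ> inv_into (tdists A) a') t) = tle C s t"
        using ia' ee1(4) ea1(4) by simp
    qed
  qed
  have 4: "(e \<circ> inv_into (tpts A) a) ` a ` tpts A \<subseteq> tpts N" using ia ee1(1) by auto
  have 5: "\<forall>x\<in>a ` tpts A. \<forall>y\<in>a ` tpts A. tdist C x y \<in> a' ` tdists A \<and>
      tdist N ((e \<circ> inv_into (tpts A) a) x) ((e \<circ> inv_into (tpts A) a) y) = (e' \<circ> inv_into (tdists A) a') (tdist C x y)"
  proof (intro ballI)
    fix x y assume "x \<in> a ` tpts A" "y \<in> a ` tpts A"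
    then obtain x0 y0 where xy: "x0 \<in> tpts A" "y0 \<in> tpts A" "x = a x0" "y = a y0" by blast
    have d: "tdist C x y = a' (tdist A x0 y0)" using xy ea1(5) by simp
    have dA: "tdist A x0 y0 \<in> tdists A" using t_dist[OF TA xy(1,2)] .
    show "tdist C x y \<in> a' ` tdists A \<and>
      tdist N ((e \<circ> inv_into (tpts A) a) x) ((e \<circ> inv_into (tpts A) a) y) = (e' \<circ> inv_into (tdists A) a') (tdist C x y)"
      using d dA xy ia ia'[OF dA] ee1(5) by simp
  qed
  show ?thesis unfolding pdata_def using fin ea1(1,2) 1 2 3 4 5 by blast
qed

lemma sub_facts:
  assumes "substructure A X"
  shows "is_tsu A" "tpts A \<subseteq> tpts X" "tdists A \<subseteq> tdists X" "tzero A = tzero X"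
    "\<And>s t. s \<in> tdists A \<Longrightarrow> t \<in> tdists A \<Longrightarrow> tle X s t \<longleftrightarrow> tle A s t"
    "\<And>x y. x \<in> tpts A \<Longrightarrow> y \<in> tpts A \<Longrightarrow> tdist X x y = tdist A x y"
  using assms unfolding substructure_def dc_emb_def by auto

lemma EP_hom:
  assumes EX: "EP X" and c: "countable (tpts X)" "countable (tdists X)"
  shows "dc_homogeneous X"
  unfolding dc_homogeneous_def
proof (intro allI impI)
  fix A B f g assume h: "substructure A X \<and> finite_tsu A \<and> substructure B X \<and> finite_tsu B \<and> dc_iso A B f g"
  have sA: "substructure A X" and sB: "substructure B X" and fA: "finite_tsu A" and i: "dc_iso A B f g"
    using h by blast+
  note a = sub_facts[OF sA] and b = sub_facts[OF sB]
  have e: "dc_emb A B f g" using i unfolding dc_iso_def by blast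
  have e1: "f ` tpts A \<subseteq> tpts B" "g ` tdists A \<subseteq> tdists B" "g (tzero A) = tzero B"
    "\<forall>s\<in>tdists A. \<forall>t\<in>tdists A. tle B (g s) (g t) \<longleftrightarrow> tle A s t"
    "\<forall>x\<in>tpts A. \<forall>x'\<in>tpts A. tdist B (f x) (f x') = g (tdist A x x')"
    using e unfolding dc_emb_def by blast+
  have pd: "pdata X X (tpts A) (tdists A) f g"
    unfolding pdata_def
  proof (intro conjI)
    show "finite (tpts A)" "finite (tdists A)" using fA unfolding finite_tsu_def by blast+
    show "tpts A \<subseteq> tpts X" "tdists A \<subseteq> tdists X" using a by blast+
    show "tzero X \<in> tdists A" using t_zero[OF a(1)] a(4) by simp
    show "g (tzero X) = tzero X" using e1(3) a(4) b(4) by simp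
    show "oemb X X g (tdists A)" unfolding oemb_def
    proof
      show "g ` tdists A \<subseteq> tdists X" using e1(2) b(3) by blast
      show "\<forall>s\<in>tdists A. \<forall>t\<in>tdists A. tle X (g s) (g t) = tle X s t"
      proof (intro ballI)
        fix s t assume st: "s \<in> tdists A" "t \<in> tdists A"
        then have "g s \<in> tdists B" "g t \<in> tdists B" using e1(2) by blast+
        then have "tle X (g s) (g t) = tle B (g s) (g t)" using b(5) by blast
        also have "\<dots> = tle A s t" using e1(4) st by blast
        also have "\<dots> = tle X s t" using a(5) st by blast
        finally show "tle X (g s) (g t) = tle X s t" .
      qed
    qed
    show "f ` tpts A \<subseteq> tpts X" using e1(1) b(2) by blast
    show "\<forall>x\<in>tpts A. \<forall>y\<in>tpts A. tdist X x y \<in> tdists A \<and> tdist X (f x) (f y) = g (tdist X x y)"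
    proof (intro ballI)
      fix x y assume xy: "x \<in> tpts A" "y \<in> tpts A"
      then have fxy: "f x \<in> tpts B" "f y \<in> tpts B" using e1(1) by blast+
      have "tdist X x y = tdist A x y" using a(6) xy by blast
      moreover have "tdist X (f x) (f y) = tdist B (f x) (f y)" using b(6) fxy by blast
      ultimately show "tdist X x y \<in> tdists A \<and> tdist X (f x) (f y) = g (tdist X x y)"
        using t_dist[OF a(1) xy] e1(5) xy by simp
    qed
  qed
  show "\<exists>F G. dc_iso X X F G \<and> (\<forall>x\<in>tpts A. F x = f x) \<and> (\<forall>t\<in>tdists A. G t = g t)"
    using bf_iso[OF EX EX c c pd] .
qed

lemma EP_isohom:
  assumes EX: "EP X" and c: "countable (tpts X)"
  shows "iso_homogeneous X"
  unfolding iso_homogeneous_def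
proof (intro allI impI)
  fix A B f assume h: "substructure A X \<and> finite_tsu A \<and> substructure B X \<and> finite_tsu B \<and> isometry A B f"
  have sA: "substructure A X" and sB: "substructure B X" and fA: "finite_tsu A" and i: "isometry A B f"
    using h by blast+
  note a = sub_facts[OF sA] and b = sub_facts[OF sB]
  have e: "dc_emb A B f id" using i unfolding isometry_def dc_iso_def by blast
  have e1: "f ` tpts A \<subseteq> tpts B" "\<forall>x\<in>tpts A. \<forall>x'\<in>tpts A. tdist B (f x) (f x') = tdist A x x'"
    using e unfolding dc_emb_def by auto
  let ?R0 = "(\<lambda>x. (x, f x)) ` tpts A"
  have ok: "okP X X id ?R0"
    unfolding okP_def
  proof (intro conjI)
    show "finite ?R0" using fA unfolding finite_tsu_def by blast
    show "?R0 \<subseteq> tpts X \<times> tpts X" using a(2) b(2) e1(1) by blast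
    show "\<forall>p\<in>?R0. \<forall>q\<in>?R0. tdist X (snd p) (snd q) = id (tdist X (fst p) (fst q))"
    proof (intro ballI)
      fix p q assume "p \<in> ?R0" "q \<in> ?R0"
      then obtain x y where xy: "x \<in> tpts A" "y \<in> tpts A" "p = (x, f x)" "q = (y, f y)" by blast
      have "f x \<in> tpts B" "f y \<in> tpts B" using e1(1) xy by blast+
      then have "tdist X (f x) (f y) = tdist B (f x) (f y)" using b(6) by blast
      also have "\<dots> = tdist A x y" using e1(2) xy by blast
      also have "\<dots> = tdist X x y" using a(6) xy by simp
      finally show "tdist X (snd p) (snd q) = id (tdist X (fst p) (fst q))" using xy by simp
    qed
  qed
  obtain F where F: "bij_betw F (tpts X) (tpts X)"
    "\<forall>x\<in>tpts X. \<forall>x'\<in>tpts X. tdist X (F x) (F x') = tdist X x x'" "\<forall>(x,y)\<in>?R0. F x = y"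
    using bf_isometry[OF EX c ok] by blast
  have TX: "is_tsu X" using EP_tsu[OF EX] .
  have "dc_iso X X F id"
    by (rule gmap_dc_iso[OF gmap_id[OF TX] bij_betw_id F(1)]) (use F(2) in simp)
  then have "isometry X X F" unfolding isometry_def by simp
  moreover have "\<forall>x\<in>tpts A. F x = f x" using F(3) by auto
  ultimately show "\<exists>F. isometry X X F \<and> (\<forall>x\<in>tpts A. F x = f x)" by blast
qed

definition clE :: "('a,'b) tsu \<Rightarrow> 'a set \<Rightarrow> 'b set \<Rightarrow> 'b set" where
  "clE Y S E = insert (tzero Y) (E \<union> (\<lambda>p. tdist Y (fst p) (snd p)) ` (S \<times> S))"

lemma clE_closed: "is_tsu Y \<Longrightarrow> S \<subseteq> tpts Y \<Longrightarrow> E \<subseteq> tdists Y \<Longrightarrow> closed Y S (clE Y S E)"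
proof -
  assume T: "is_tsu Y" and S: "S \<subseteq> tpts Y" and E: "E \<subseteq> tdists Y"
  have 1: "(\<lambda>p. tdist Y (fst p) (snd p)) ` (S \<times> S) \<subseteq> tdists Y"
  proof
    fix t assume "t \<in> (\<lambda>p. tdist Y (fst p) (snd p)) ` (S \<times> S)"
    then obtain x y where "x \<in> S" "y \<in> S" "t = tdist Y x y" by auto
    then show "t \<in> tdists Y" using t_dist[OF T] S by blast
  qed
  have 2: "tdist Y x y \<in> clE Y S E" if "x \<in> S" "y \<in> S" for x y
  proof -
    have "(x,y) \<in> S \<times> S" using that by blast
    then have "tdist Y x y \<in> (\<lambda>p. tdist Y (fst p) (snd p)) ` (S \<times> S)" by force
    then show ?thesis unfolding clE_def by blast
  qed
  show ?thesis unfolding closed_def using S E 1 2 t_zero[OF T] unfolding clE_def by blast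
qed

lemma clE_fin: "finite S \<Longrightarrow> finite E \<Longrightarrow> finite (clE Y S E)"
  unfolding clE_def by simp

lemma clE_sup: "E \<subseteq> clE Y S E" unfolding clE_def by blast

lemma M_count: "countable_tsu M"
  unfolding countable_tsu_def using M_tsu by simp

lemma M_univ: "finite_tsu A \<Longrightarrow> \<exists>f g. dc_emb A M f g"
proof -
  assume fA: "finite_tsu A"
  then have TA: "is_tsu A" and fin: "finite (tpts A)" "finite (tdists A)" unfolding finite_tsu_def by blast+
  show ?thesis using emb_ext[OF TA fin EP_M pdata_triv[OF TA M_tsu]] by blast
qed

lemma M_FL: "fraisse_limit M"
proof -
  define C where "C n = subs M {..<n} (clE M {..<n} {..<n})" for n
  have cl: "closed M {..<n} (clE M {..<n} {..<n})" for n using clE_closed[OF M_tsu] by simp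
  have 1: "substructure (C n) M \<and> finite_tsu (C n)" for n
    unfolding C_def using subs_sub[OF M_tsu cl] subs_fin[OF M_tsu cl] clE_fin by blast
  have mono: "clE M {..<n} {..<n} \<subseteq> clE M {..<Suc n} {..<Suc n}" for n
    unfolding clE_def by auto
  have 2: "substructure (C n) (C (Suc n))" for n
    unfolding C_def by (rule subs_sub2[OF M_tsu cl]) (auto simp: mono)
  have 3: "tpts M = (\<Union>n. tpts (C n))" unfolding C_def by auto
  have 4: "tdists M = (\<Union>n. tdists (C n))"
  proof -
    have "t \<in> tdists (C (Suc t))" for t unfolding C_def clE_def by simp
    then show ?thesis by auto
  qed
  have hom: "dc_homogeneous M" using EP_hom[OF EP_M] by simp
  have ex: "\<exists>C :: nat \<Rightarrow> (nat, nat) tsu. (\<forall>n. substructure (C n) M \<and> finite_tsu (C n)) \<and>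
        (\<forall>n. substructure (C n) (C (Suc n))) \<and>
        tpts M = (\<Union>n. tpts (C n)) \<and> tdists M = (\<Union>n. tdists (C n))"
    by (intro exI[of _ C]) (use 1 2 3 4 in blast)
  have un: "\<forall>A :: (nat, nat) tsu. finite_tsu A \<longrightarrow> (\<exists>f g. dc_emb A M f g)" using M_univ by blast
  show ?thesis unfolding fraisse_limit_def using M_count ex un hom by blast
qed

lemma pattern:
  fixes U :: "('i,'j) tsu"
  assumes FL: "fraisse_limit U" and cU: "closed U S E" and fS: "finite S" "finite E"
    and e: "dc_emb (subs U S E) M f g" and cM: "closed M S' E'" and fS': "finite S'" "finite E'"
    and inc: "f ` S \<subseteq> S'" "g ` E \<subseteq> E'"
  shows "\<exists>F' G'. dc_emb (subs M S' E') U F' G' \<and> (\<forall>x\<in>S. F' (f x) = x) \<and> (\<forall>t\<in>E. G' (g t) = t)"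
proof -
  have TU: "is_tsu U" using FL unfolding fraisse_limit_def countable_tsu_def by blast
  have univ: "\<forall>A :: (nat, nat) tsu. finite_tsu A \<longrightarrow> (\<exists>f g. dc_emb A U f g)"
    using FL unfolding fraisse_limit_def by blast
  have hom: "dc_homogeneous U" using FL unfolding fraisse_limit_def by blast
  let ?A = "subs U S E" and ?B = "subs M S' E'"
  have TA: "is_tsu ?A" using subs_tsu[OF TU cU] .
  have fB: "finite_tsu ?B" using subs_fin[OF M_tsu cM fS'] .
  obtain h k where hk: "dc_emb ?B U h k" using univ fB by blast
  have eAB: "dc_emb ?A ?B f g" using dc_emb_subs[OF e] inc by simp
  have eAU: "dc_emb ?A U (h \<circ> f) (k \<circ> g)" using dc_emb_comp[OF eAB hk] .
  let ?S2 = "(h \<circ> f) ` S" and ?E2 = "(k \<circ> g) ` E"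
  have iso: "dc_iso ?A (subs U ?S2 ?E2) (h \<circ> f) (k \<circ> g)" using img_iso[OF TA eAU] by simp
  have cl2: "closed U ?S2 ?E2" using img_closed[OF TA eAU] by simp
  have s2: "substructure (subs U ?S2 ?E2) U" "finite_tsu (subs U ?S2 ?E2)"
    using subs_sub[OF TU cl2] subs_fin[OF TU cl2] fS by auto
  have s1: "substructure ?A U" "finite_tsu ?A" using subs_sub[OF TU cU] subs_fin[OF TU cU fS] by auto
  have inv: "dc_iso (subs U ?S2 ?E2) ?A (inv_into S (h \<circ> f)) (inv_into E (k \<circ> g))"
    using dc_iso_inv[OF TA iso] by simp
  have pre: "substructure (subs U ?S2 ?E2) U \<and> finite_tsu (subs U ?S2 ?E2) \<and> substructure ?A U \<and> finite_tsu ?A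
     \<and> dc_iso (subs U ?S2 ?E2) ?A (inv_into S (h \<circ> f)) (inv_into E (k \<circ> g))" using s1 s2 inv by blast
  obtain F G where FG0: "dc_iso U U F G" "\<forall>x\<in>tpts (subs U ?S2 ?E2). F x = inv_into S (h \<circ> f) x"
    "\<forall>t\<in>tdists (subs U ?S2 ?E2). G t = inv_into E (k \<circ> g) t"
    using hom[unfolded dc_homogeneous_def, rule_format, OF pre] by blast
  have FG: "dc_iso U U F G" "\<forall>x\<in>?S2. F x = inv_into S (h \<circ> f) x"
    "\<forall>t\<in>?E2. G t = inv_into E (k \<circ> g) t" using FG0 unfolding subs_sel by blast+
  have e2: "dc_emb ?B U (F \<circ> h) (G \<circ> k)" using dc_emb_comp[OF hk dc_iso_emb[OF FG(1)]] .
  have ihf: "inj_on (h \<circ> f) S" using eAU unfolding dc_emb_def by simp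
  have ikg: "inj_on (k \<circ> g) E" using dc_emb_ginj[OF TA eAU] by simp
  have "\<forall>x\<in>S. (F \<circ> h) (f x) = x"
  proof
    fix x assume x: "x \<in> S"
    have "inv_into S (h \<circ> f) ((h \<circ> f) x) = x" using inv_into_f_f[OF ihf x] .
    then show "(F \<circ> h) (f x) = x" using FG(2) x by simp
  qed
  moreover have "\<forall>t\<in>E. (G \<circ> k) (g t) = t"
  proof
    fix t assume t: "t \<in> E"
    have "inv_into E (k \<circ> g) ((k \<circ> g) t) = t" using inv_into_f_f[OF ikg t] .
    then show "(G \<circ> k) (g t) = t" using FG(3) t by simp
  qed
  ultimately show ?thesis using e2 by blast
qed


lemma emb_le: "dc_emb X Y f g \<Longrightarrow> s \<in> tdists X \<Longrightarrow> t \<in> tdists X \<Longrightarrow> tle Y (g s) (g t) \<longleftrightarrow> tle X s t"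
  unfolding dc_emb_def by blast
lemma emb_d: "dc_emb X Y f g \<Longrightarrow> x \<in> tpts X \<Longrightarrow> y \<in> tpts X \<Longrightarrow> tdist Y (f x) (f y) = g (tdist X x y)"
  unfolding dc_emb_def by blast
lemma emb_z: "dc_emb X Y f g \<Longrightarrow> g (tzero X) = tzero Y"
  unfolding dc_emb_def by blast
lemma emb_P: "dc_emb X Y f g \<Longrightarrow> x \<in> tpts X \<Longrightarrow> f x \<in> tpts Y"
  unfolding dc_emb_def by blast
lemma emb_D: "dc_emb X Y f g \<Longrightarrow> t \<in> tdists X \<Longrightarrow> g t \<in> tdists Y"
  unfolding dc_emb_def by blast
lemma emb_inj: "dc_emb X Y f g \<Longrightarrow> inj_on f (tpts X)"
  unfolding dc_emb_def by blast

lemma closed_dists: "is_tsu U \<Longrightarrow> E \<subseteq> tdists U \<Longrightarrow> tzero U \<in> E \<Longrightarrow> closed U {} E"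
  unfolding closed_def by blast

lemma closed_M: "tzero M \<in> E \<Longrightarrow> (\<forall>x\<in>S. \<forall>y\<in>S. tdist M x y \<in> E) \<Longrightarrow> closed M S E"
  unfolding closed_def by simp

lemma emb_to_M:
  assumes TU: "is_tsu U" and c: "closed U S E" and fin: "finite S" "finite E"
  shows "\<exists>f g. dc_emb (subs U S E) M f g"
proof -
  have TA: "is_tsu (subs U S E)" using subs_tsu[OF TU c] .
  have "\<exists>f g. dc_emb (subs U S E) M f g \<and> g (tzero U) = qe 0"
    using emb_ext[OF TA _ _ EP_M pdata_triv[OF TA M_tsu]] fin by simp
  then show ?thesis by blast
qed

lemma EP_FL:
  fixes U :: "('i,'j) tsu"
  assumes FL: "fraisse_limit U"
  shows "EP U"
proof -
  have TU: "is_tsu U" using FL unfolding fraisse_limit_def countable_tsu_def by blast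
  show ?thesis
  proof (rule EPI[OF TU])
    show "\<forall>t\<in>tdists U. \<exists>u\<in>tdists U. tle U t u \<and> t \<noteq> u"
    proof
      fix t assume t: "t \<in> tdists U"
      let ?E = "{tzero U, t}"
      have cU: "closed U {} ?E" by (rule closed_dists[OF TU]) (use t t_zero[OF TU] in auto)
      have TA: "is_tsu (subs U {} ?E)" using subs_tsu[OF TU cU] .
      obtain f g where e: "dc_emb (subs U {} ?E) M f g" using emb_to_M[OF TU cU] by auto
      obtain u where u: "tle M (g t) u" "g t \<noteq> u" using EP_nomax[OF EP_M, of "g t"] by auto
      let ?E' = "insert u (g ` ?E)"
      have z: "g (tzero U) = tzero M" using emb_z[OF e] by simp
      have cM: "closed M {} ?E'" by (rule closed_M) (use z in auto)
      obtain F' G' where FG: "dc_emb (subs M {} ?E') U F' G'" "\<forall>t\<in>?E. G' (g t) = t"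
        using pattern[OF FL cU _ _ e cM] by auto
      have TB: "is_tsu (subs M {} ?E')" using subs_tsu[OF M_tsu cM] .
      have gt: "g t \<in> ?E'" "u \<in> ?E'" by auto
      have "tle U (G' (g t)) (G' u)" using emb_le[OF FG(1)] gt u(1) by simp
      then have 1: "tle U t (G' u)" using FG(2) by simp
      have "G' (g t) \<noteq> G' u" using dc_emb_ginj[OF TB FG(1)] gt u(2) unfolding inj_on_def by simp
      then have 2: "t \<noteq> G' u" using FG(2) by simp
      have "G' u \<in> tdists U" using emb_D[OF FG(1)] gt by simp
      then show "\<exists>u\<in>tdists U. tle U t u \<and> t \<noteq> u" using 1 2 by blast
    qed
  next
    show "\<forall>s\<in>tdists U. \<forall>t\<in>tdists U. tle U s t \<and> s \<noteq> t \<longrightarrow>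
        (\<exists>u\<in>tdists U. tle U s u \<and> s \<noteq> u \<and> tle U u t \<and> u \<noteq> t)"
    proof (intro ballI impI)
      fix s t assume s: "s \<in> tdists U" and t: "t \<in> tdists U" and st: "tle U s t \<and> s \<noteq> t"
      let ?E = "{tzero U, s, t}"
      have cU: "closed U {} ?E" by (rule closed_dists[OF TU]) (use s t t_zero[OF TU] in auto)
      have TA: "is_tsu (subs U {} ?E)" using subs_tsu[OF TU cU] .
      obtain f g where e: "dc_emb (subs U {} ?E) M f g" using emb_to_M[OF TU cU] by auto
      have sE: "s \<in> ?E" "t \<in> ?E" by auto
      have gle: "tle M (g s) (g t)" using emb_le[OF e] sE st by simp
      have gne: "g s \<noteq> g t" using dc_emb_ginj[OF TA e] sE st unfolding inj_on_def by simp
      obtain u where u: "tle M (g s) u" "g s \<noteq> u" "tle M u (g t)" "u \<noteq> g t"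
        using EP_dense[OF EP_M _ _ gle gne] by auto
      let ?E' = "insert u (g ` ?E)"
      have z: "g (tzero U) = tzero M" using emb_z[OF e] by simp
      have cM: "closed M {} ?E'" by (rule closed_M) (use z in auto)
      obtain F' G' where FG: "dc_emb (subs M {} ?E') U F' G'" "\<forall>t\<in>?E. G' (g t) = t"
        using pattern[OF FL cU _ _ e cM] by auto
      have TB: "is_tsu (subs M {} ?E')" using subs_tsu[OF M_tsu cM] .
      have gt: "g s \<in> ?E'" "g t \<in> ?E'" "u \<in> ?E'" by auto
      have "tle U (G' (g s)) (G' u)" "tle U (G' u) (G' (g t))" using emb_le[OF FG(1)] gt u by simp_all
      then have 1: "tle U s (G' u)" "tle U (G' u) t" using FG(2) by simp_all
      have ij: "inj_on G' ?E'" using dc_emb_ginj[OF TB FG(1)] by simp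
      have "G' (g s) \<noteq> G' u" "G' u \<noteq> G' (g t)" using ij gt u unfolding inj_on_def by metis+
      then have 2: "s \<noteq> G' u" "G' u \<noteq> t" using FG(2) by simp_all
      have "G' u \<in> tdists U" using emb_D[OF FG(1)] gt by simp
      then show "\<exists>u\<in>tdists U. tle U s u \<and> s \<noteq> u \<and> tle U u t \<and> u \<noteq> t" using 1 2 by blast
    qed
  next
    show "\<forall>S r. finite S \<and> S \<subseteq> tpts U \<and> (\<forall>x\<in>S. r x \<in> tdists U \<and> r x \<noteq> tzero U) \<and>
        (\<forall>x\<in>S. \<forall>y\<in>S. ultra U (r x) (r y) (tdist U x y)) \<longrightarrow>
        (\<exists>p\<in>tpts U. \<forall>x\<in>S. tdist U p x = r x)"
    proof (intro allI impI)
      fix S r assume h: "finite S \<and> S \<subseteq> tpts U \<and> (\<forall>x\<in>S. r x \<in> tdists U \<and> r x \<noteq> tzero U) \<and>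
        (\<forall>x\<in>S. \<forall>y\<in>S. ultra U (r x) (r y) (tdist U x y))"
      have fS: "finite S" and SU: "S \<subseteq> tpts U" using h by blast+
      have rD: "r x \<in> tdists U" "r x \<noteq> tzero U" if "x \<in> S" for x using h that by blast+
      have ul: "ultra U (r x) (r y) (tdist U x y)" if "x \<in> S" "y \<in> S" for x y using h that by blast
      define E where "E = insert (tzero U) (r ` S \<union> (\<lambda>p. tdist U (fst p) (snd p)) ` (S \<times> S))"
      have E_eq: "E = clE U S (r ` S)" unfolding E_def clE_def by simp
      have cU: "closed U S E" unfolding E_eq by (rule clE_closed[OF TU SU]) (use rD in auto)
      have fE: "finite E" unfolding E_def using fS by simp
      have TA: "is_tsu (subs U S E)" using subs_tsu[OF TU cU] .
      obtain f g where e: "dc_emb (subs U S E) M f g" using emb_to_M[OF TU cU fS fE] by auto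
      have rE: "r x \<in> E" if "x \<in> S" for x unfolding E_def using that by blast
      have dE: "tdist U x y \<in> E" if "x \<in> S" "y \<in> S" for x y
        using cU that unfolding closed_def by blast
      have zE: "tzero U \<in> E" unfolding E_def by blast
      have ginj: "inj_on g E" using dc_emb_ginj[OF TA e] by simp
      have finj: "inj_on f S" using emb_inj[OF e] by simp
      have z: "g (tzero U) = tzero M" using emb_z[OF e] by simp
      define r' where "r' z = g (r (inv_into S f z))" for z
      have r'f: "r' (f x) = g (r x)" if "x \<in> S" for x unfolding r'_def using inv_into_f_f[OF finj that] by simp
      have oe: "oemb (subs U S E) M g E" using dc_emb_oemb[OF e] by simp
      have "\<exists>p\<in>tpts M. \<forall>z\<in>f ` S. tdist M p z = r' z"
      proof (rule EP_pt[OF EP_M])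
        show "finite (f ` S)" using fS by simp
        show "f ` S \<subseteq> tpts M" by simp
      next
        fix z assume "z \<in> f ` S"
        then obtain x where x: "x \<in> S" "z = f x" by blast
        have "g (r x) \<noteq> g (tzero U)" using ginj rE[OF x(1)] zE rD(2)[OF x(1)] unfolding inj_on_def by metis
        then show "r' z \<in> tdists M \<and> r' z \<noteq> tzero M" using r'f[OF x(1)] x z by simp
      next
        fix z1 z2 assume "z1 \<in> f ` S" "z2 \<in> f ` S"
        then obtain x y where xy: "x \<in> S" "y \<in> S" "z1 = f x" "z2 = f y" by blast
        have u: "ultra (subs U S E) (r x) (r y) (tdist U x y)"
          using ul[OF xy(1,2)] unfolding ultra_def subs_sel .
        have "ultra M (g (r x)) (g (r y)) (g (tdist U x y))"
          by (rule oemb_ultra[OF oe rE[OF xy(1)] rE[OF xy(2)] dE[OF xy(1,2)] u])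
        moreover have "tdist M (f x) (f y) = g (tdist U x y)" using emb_d[OF e] xy(1,2) by simp
        ultimately show "ultra M (r' z1) (r' z2) (tdist M z1 z2)" using r'f xy by simp
      qed
      then obtain p where p: "\<forall>z\<in>f ` S. tdist M p z = r' z" by blast
      let ?S' = "insert p (f ` S)" and ?E' = "g ` E"
      have dpx: "tdist M p (f x) = g (r x)" if "x \<in> S" for x using p r'f that by simp
      have cM: "closed M ?S' ?E'"
      proof (rule closed_M)
        show "tzero M \<in> g ` E" using z zE by (metis imageI)
        show "\<forall>x\<in>?S'. \<forall>y\<in>?S'. tdist M x y \<in> g ` E"
        proof (intro ballI)
          fix a b assume a: "a \<in> ?S'" and b: "b \<in> ?S'"
          have pp: "tdist M p p \<in> g ` E" using t_self[OF M_tsu, of p] z zE by (metis UNIV_I imageI M_sel(1))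
          have px: "tdist M p (f x) \<in> g ` E" if "x \<in> S" for x using dpx[OF that] rE[OF that] by blast
          have xp: "tdist M (f x) p \<in> g ` E" if "x \<in> S" for x
            using px[OF that] t_sym[OF M_tsu, of p "f x"] by simp
          have xx: "tdist M (f x) (f y) \<in> g ` E" if "x \<in> S" "y \<in> S" for x y
            using emb_d[OF e] that dE[OF that] by simp
          show "tdist M a b \<in> g ` E" using a b pp px xp xx by blast
        qed
      qed
      obtain F' G' where FG: "dc_emb (subs M ?S' ?E') U F' G'" "\<forall>x\<in>S. F' (f x) = x" "\<forall>t\<in>E. G' (g t) = t"
        using pattern[OF FL cU fS fE e cM _ _] fS fE by auto
      have "tdist U (F' p) x = r x" if x: "x \<in> S" for x
      proof -
        have "tdist U (F' p) (F' (f x)) = G' (tdist M p (f x))" using emb_d[OF FG(1)] x by simp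
        also have "\<dots> = G' (g (r x))" using dpx[OF x] by simp
        also have "\<dots> = r x" using FG(3) rE[OF x] by simp
        finally show ?thesis using FG(2) x by simp
      qed
      moreover have "F' p \<in> tpts U" using emb_P[OF FG(1)] by simp
      ultimately show "\<exists>p\<in>tpts U. \<forall>x\<in>S. tdist U p x = r x" by blast
    qed
  qed
qed


lemma part_types:
  "\<exists>S :: (nat, nat) tsu set. countable S \<and> (\<forall>A\<in>S. finite_tsu A) \<and>
      (\<forall>X :: ('a, 'b) tsu. finite_tsu X \<longrightarrow> (\<exists>A\<in>S. dc_isomorphic X A))"
proof -
  define S where "S = {B. finite_tsu B \<and> (\<exists>P E. finite P \<and> finite E \<and> B = subs M P E)}"
  have sub: "S \<subseteq> (\<lambda>(P,E). subs M P E) ` (Collect finite \<times> Collect finite)"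
  proof
    fix B assume "B \<in> S"
    then obtain P E where PE: "finite P" "finite E" "B = subs M P E" unfolding S_def by blast
    show "B \<in> (\<lambda>(P,E). subs M P E) ` (Collect finite \<times> Collect finite)"
      by (rule image_eqI[where x="(P,E)"]) (use PE in simp_all)
  qed
  have cf: "countable (Collect finite :: nat set set)" by (rule countable_Collect_finite)
  have "countable ((Collect finite :: nat set set) \<times> (Collect finite :: nat set set))" by (rule countable_SIGMA[OF cf cf])
  then have "countable ((\<lambda>(P,E). subs M P E) ` (Collect finite \<times> Collect finite))" by (rule countable_image)
  then have c: "countable S" using sub countable_subset by blast
  have "\<exists>A\<in>S. dc_isomorphic X A" if fX: "finite_tsu X" for X :: "('a, 'b) tsu"
  proof -
    have TX: "is_tsu X" and fin: "finite (tpts X)" "finite (tdists X)" using fX unfolding finite_tsu_def by blast+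
    obtain f g where e: "dc_emb X M f g" using M_univ[OF fX] by blast
    let ?B = "subs M (f ` tpts X) (g ` tdists X)"
    have "finite_tsu ?B" using subs_fin[OF M_tsu img_closed[OF TX e]] fin by simp
    then have "?B \<in> S" unfolding S_def using fin by blast
    moreover have "dc_isomorphic X ?B" unfolding dc_isomorphic_def using img_iso[OF TX e] by blast
    ultimately show ?thesis by blast
  qed
  moreover have "\<forall>A\<in>S. finite_tsu A" unfolding S_def by blast
  ultimately show ?thesis using c by blast
qed

lemma part_jep:
  fixes B :: "('c, 'd) tsu" and C :: "('e, 'f) tsu"
  assumes fB: "finite_tsu B" and fC: "finite_tsu C"
  shows "\<exists>D :: (nat, nat) tsu. finite_tsu D \<and> (\<exists>f g. dc_emb B D f g) \<and> (\<exists>f g. dc_emb C D f g)"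
proof -
  obtain f g where e1: "dc_emb B M f g" using M_univ[OF fB] by blast
  obtain f' g' where e2: "dc_emb C M f' g'" using M_univ[OF fC] by blast
  let ?S = "f ` tpts B \<union> f' ` tpts C" and ?E0 = "g ` tdists B \<union> g' ` tdists C"
  let ?D = "subs M ?S (clE M ?S ?E0)"
  have cl: "closed M ?S (clE M ?S ?E0)" by (rule clE_closed[OF M_tsu]) simp_all
  have fB': "finite (tpts B)" "finite (tdists B)" using fB unfolding finite_tsu_def by blast+
  have fC': "finite (tpts C)" "finite (tdists C)" using fC unfolding finite_tsu_def by blast+
  have fS: "finite ?S" "finite ?E0" using fB' fC' by simp_all
  have fD: "finite_tsu ?D" using subs_fin[OF M_tsu cl fS(1) clE_fin[OF fS]] .
  have sup: "?E0 \<subseteq> clE M ?S ?E0" by (rule clE_sup)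
  have "dc_emb B ?D f g" by (rule dc_emb_subs[OF e1]) (use sup in blast)+
  moreover have "dc_emb C ?D f' g'" by (rule dc_emb_subs[OF e2]) (use sup in blast)+
  ultimately show ?thesis using fD by blast
qed

lemma part_ap:
  fixes A :: "('g, 'h) tsu" and B :: "('c, 'd) tsu" and C :: "('e, 'f) tsu"
  assumes fA: "finite_tsu A" and fB: "finite_tsu B" and fC: "finite_tsu C"
    and ea1: "dc_emb A B a1 a1'" and ea2: "dc_emb A C a2 a2'"
  shows "\<exists>(D :: (nat, nat) tsu) b1 b1' b2 b2'. finite_tsu D \<and> dc_emb B D b1 b1' \<and> dc_emb C D b2 b2' \<and>
         (\<forall>x\<in>tpts A. b1 (a1 x) = b2 (a2 x)) \<and> (\<forall>t\<in>tdists A. b1' (a1' t) = b2' (a2' t))"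
proof -
  have TA: "is_tsu A" and finA: "finite (tpts A)" "finite (tdists A)" using fA unfolding finite_tsu_def by blast+
  have TC: "is_tsu C" and finC: "finite (tpts C)" "finite (tdists C)" using fC unfolding finite_tsu_def by blast+
  obtain b1 b1' where eb1: "dc_emb B M b1 b1'" using M_univ[OF fB] by blast
  have eAM: "dc_emb A M (b1 \<circ> a1) (b1' \<circ> a1')" using dc_emb_comp[OF ea1 eb1] .
  have pd: "pdata C M (a2 ` tpts A) (a2' ` tdists A) ((b1 \<circ> a1) \<circ> inv_into (tpts A) a2) ((b1' \<circ> a1') \<circ> inv_into (tdists A) a2')"
    using pdata_emb[OF TA finA ea2 eAM] .
  obtain b2 b2' where eb2: "dc_emb C M b2 b2'"
    and ext1: "\<forall>x\<in>a2 ` tpts A. b2 x = ((b1 \<circ> a1) \<circ> inv_into (tpts A) a2) x"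
    and ext2: "\<forall>t\<in>a2' ` tdists A. b2' t = ((b1' \<circ> a1') \<circ> inv_into (tdists A) a2') t"
    using emb_ext[OF TC finC EP_M pd] by blast
  have i2: "inj_on a2 (tpts A)" using emb_inj[OF ea2] .
  have i2': "inj_on a2' (tdists A)" using dc_emb_ginj[OF TA ea2] .
  have c1: "\<forall>x\<in>tpts A. b1 (a1 x) = b2 (a2 x)"
  proof
    fix x assume x: "x \<in> tpts A"
    have "b2 (a2 x) = b1 (a1 (inv_into (tpts A) a2 (a2 x)))" using ext1 x by simp
    then show "b1 (a1 x) = b2 (a2 x)" using inv_into_f_f[OF i2 x] by simp
  qed
  have c2: "\<forall>t\<in>tdists A. b1' (a1' t) = b2' (a2' t)"
  proof
    fix t assume t: "t \<in> tdists A"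
    have "b2' (a2' t) = b1' (a1' (inv_into (tdists A) a2' (a2' t)))" using ext2 t by simp
    then show "b1' (a1' t) = b2' (a2' t)" using inv_into_f_f[OF i2' t] by simp
  qed
  let ?S = "b1 ` tpts B \<union> b2 ` tpts C" and ?E0 = "b1' ` tdists B \<union> b2' ` tdists C"
  let ?D = "subs M ?S (clE M ?S ?E0)"
  have cl: "closed M ?S (clE M ?S ?E0)" by (rule clE_closed[OF M_tsu]) simp_all
  have fB': "finite (tpts B)" "finite (tdists B)" using fB unfolding finite_tsu_def by blast+
  have fS: "finite ?S" "finite ?E0" using fB' finC by simp_all
  have fD: "finite_tsu ?D" using subs_fin[OF M_tsu cl fS(1) clE_fin[OF fS]] .
  have sup: "?E0 \<subseteq> clE M ?S ?E0" by (rule clE_sup)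
  have "dc_emb B ?D b1 b1'" by (rule dc_emb_subs[OF eb1]) (use sup in blast)+
  moreover have "dc_emb C ?D b2 b2'" by (rule dc_emb_subs[OF eb2]) (use sup in blast)+
  ultimately show ?thesis using fD c1 c2 by blast
qed

lemma part_limit:
  fixes U :: "('i, 'j) tsu"
  assumes FL: "fraisse_limit U"
  shows "(\<forall>(P :: 'k set) d. is_UQ P d \<longrightarrow> dc_isomorphic U (rat_tsu P d)) \<and>
      dc_homogeneous U \<and> iso_homogeneous U"
proof -
  have EU: "EP U" using EP_FL[OF FL] .
  have TU: "is_tsu U" using EP_tsu[OF EU] .
  have cU: "countable (tpts U)" "countable (tdists U)" using FL unfolding fraisse_limit_def countable_tsu_def by blast+
  have 1: "dc_isomorphic U (rat_tsu P d)" if UQ: "is_UQ P d" for P :: "'k set" and d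
  proof -
    have ER: "EP (rat_tsu P d)" using EP_UQ[OF UQ] .
    have cP: "countable P" using UQ unfolding is_UQ_def by blast
    have cQ: "countable {q::rat. 0 \<le> q}" by (rule countableI'[of id]) simp
    have pd: "pdata U (rat_tsu P d) {} {tzero U} f0 (\<lambda>_. tzero (rat_tsu P d))" for f0 :: "'i \<Rightarrow> 'k"
      using pdata_triv[OF TU EP_tsu[OF ER]] .
    obtain F G where "dc_iso U (rat_tsu P d) F G"
      using bf_iso[OF EU ER cU _ _ pd] cP cQ by auto
    then show ?thesis unfolding dc_isomorphic_def by blast
  qed
  have 2: "dc_homogeneous U" using FL unfolding fraisse_limit_def by blast
  have 3: "iso_homogeneous U" using EP_isohom[OF EU cU(1)] .
  show ?thesis using 1 2 3 by blast
qed

theorem theorem3p11: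
  shows
  \<comment> \<open>nonempty\<close>
  "(\<exists>A :: (nat, nat) tsu. finite_tsu A) \<and>
   \<comment> \<open>countably many dc-isomorphism types\<close>
   (\<exists>S :: (nat, nat) tsu set. countable S \<and> (\<forall>A\<in>S. finite_tsu A) \<and>
      (\<forall>X :: ('a, 'b) tsu. finite_tsu X \<longrightarrow> (\<exists>A\<in>S. dc_isomorphic X A))) \<and>
   \<comment> \<open>joint embedding property\<close>
   (\<forall>(B :: ('c, 'd) tsu) (C :: ('e, 'f) tsu). finite_tsu B \<and> finite_tsu C \<longrightarrow>
      (\<exists>D :: (nat, nat) tsu. finite_tsu D \<and> (\<exists>f g. dc_emb B D f g) \<and> (\<exists>f g. dc_emb C D f g))) \<and>
   \<comment> \<open>amalgamation property\<close>
   (\<forall>(A :: ('g, 'h) tsu) (B :: ('c, 'd) tsu) (C :: ('e, 'f) tsu) a1 a1' a2 a2'.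
      finite_tsu A \<and> finite_tsu B \<and> finite_tsu C \<and> dc_emb A B a1 a1' \<and> dc_emb A C a2 a2' \<longrightarrow>
      (\<exists>(D :: (nat, nat) tsu) b1 b1' b2 b2'. finite_tsu D \<and> dc_emb B D b1 b1' \<and> dc_emb C D b2 b2' \<and>
         (\<forall>x\<in>tpts A. b1 (a1 x) = b2 (a2 x)) \<and> (\<forall>t\<in>tdists A. b1' (a1' t) = b2' (a2' t)))) \<and>
   \<comment> \<open>the Fraisse limit exists, U_Q exists\<close>
   (\<exists>U :: (nat, nat) tsu. fraisse_limit U) \<and>
   (\<exists>(P :: nat set) d. is_UQ P d) \<and>
   \<comment> \<open>every Fraisse limit is dc-isomorphic to U_Q and is dc- and iso-homogeneous\<close>
   (\<forall>U :: ('i, 'j) tsu. fraisse_limit U \<longrightarrow>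
      (\<forall>(P :: 'k set) d. is_UQ P d \<longrightarrow> dc_isomorphic U (rat_tsu P d)) \<and>
      dc_homogeneous U \<and> iso_homogeneous U)"
proof -
  have p1: "\<exists>A :: (nat, nat) tsu. finite_tsu A"
  proof
    have "closed M {} {tzero M}" by (rule closed_M) simp_all
    then show "finite_tsu (subs M {} {tzero M})" using subs_fin[OF M_tsu] by simp
  qed
  have p3: "\<forall>(B :: ('c, 'd) tsu) (C :: ('e, 'f) tsu). finite_tsu B \<and> finite_tsu C \<longrightarrow>
      (\<exists>D :: (nat, nat) tsu. finite_tsu D \<and> (\<exists>f g. dc_emb B D f g) \<and> (\<exists>f g. dc_emb C D f g))"
    using part_jep by blast
  have p4: "\<forall>(A :: ('g, 'h) tsu) (B :: ('c, 'd) tsu) (C :: ('e, 'f) tsu) a1 a1' a2 a2'.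
      finite_tsu A \<and> finite_tsu B \<and> finite_tsu C \<and> dc_emb A B a1 a1' \<and> dc_emb A C a2 a2' \<longrightarrow>
      (\<exists>(D :: (nat, nat) tsu) b1 b1' b2 b2'. finite_tsu D \<and> dc_emb B D b1 b1' \<and> dc_emb C D b2 b2' \<and>
         (\<forall>x\<in>tpts A. b1 (a1 x) = b2 (a2 x)) \<and> (\<forall>t\<in>tdists A. b1' (a1' t) = b2' (a2' t)))"
  proof (intro allI impI)
    fix A :: "('g, 'h) tsu" and B :: "('c, 'd) tsu" and C :: "('e, 'f) tsu" and a1 a1' a2 a2'
    assume "finite_tsu A \<and> finite_tsu B \<and> finite_tsu C \<and> dc_emb A B a1 a1' \<and> dc_emb A C a2 a2'"
    then show "\<exists>(D :: (nat, nat) tsu) b1 b1' b2 b2'. finite_tsu D \<and> dc_emb B D b1 b1' \<and> dc_emb C D b2 b2' \<and>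
         (\<forall>x\<in>tpts A. b1 (a1 x) = b2 (a2 x)) \<and> (\<forall>t\<in>tdists A. b1' (a1' t) = b2' (a2' t))"
      using part_ap by blast
  qed
  have p5: "\<exists>U :: (nat, nat) tsu. fraisse_limit U" using M_FL by blast
  have p6: "\<exists>(P :: nat set) d. is_UQ P d" using UQ_d0 by blast
  have p7: "\<forall>U :: ('i, 'j) tsu. fraisse_limit U \<longrightarrow>
      (\<forall>(P :: 'k set) d. is_UQ P d \<longrightarrow> dc_isomorphic U (rat_tsu P d)) \<and>
      dc_homogeneous U \<and> iso_homogeneous U"
    using part_limit by blast
  show ?thesis using p1 part_types p3 p4 p5 p6 p7 by blast
qed


end
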